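(* Assume the standing setup below. For every $j$ with $2\le j\le n$, the number of nonzero entries of the change of basis matrix $C(\mathcal{B}_j,\mathcal{B}_{j-1})$ satisfies \[\nu(C(\mathcal{B}_j,\mathcal{B}_{j-1}))\le \Phi_X(G_j,G_{j-1}).\] Moreover, each column of $C(\mathcal{B}_j,\mathcal{B}_{j-1})$ has at most $K_X(G_j,G_{j-1})$ nonzero entries, so that $\nu(C(\mathcal{B}_j,\mathcal{B}_{j-1}))\le K_X(G_j,G_{j-1})\,|X|$.
   Context: For a finite group $G$, $\mathcal{R}(G)$ denotes a fixed complete set of pairwise inequivalent irreducible complex matrix representations of $G$. For a finite-dimensional $\mathbb{C}G$-module $M$ with ordered basis $\mathcal{B}$, $[g]_{\mathcal{B}}$ denotes the matrix of the action of $g$ with respect to $\mathcal{B}$; $\mathcal{B}$ is a symmetry adapted basis of $M$ with respect to $\mathcal{R}(G)$ if there is a fixed partition of the positions into consecutive blocks such that for every $g\in G$, $[g]_{\mathcal{B}}$ is block diagonal with respect to these blocks and each block equals $\rho(g)$ for some $\rho\in\mathcal{R}(G)$ depending only on the block. Standing setup: $G$ is a finite group acting on a finite set $X$; $\mathbb{C}X$ is the space of functions $X\to\mathbb{C}$ with $(g\cdot f)(x)=f(g^{-1}x)$, each $x\in X$ is identified with its indicator function, and the standard basis of $\mathbb{C}X$ is $X$ itself. For a subset $Y\subseteq X$ that is a union of orbits of a subgroup, $\mathbb{C}Y$ is regarded as a submodule of $\mathbb{C}X$. We are given a chain of subgroups $\{1\}=G_1<G_2<\cdots<G_n=G$ and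 sets $\mathcal{R}(G_1),\dots,\mathcal{R}(G_n)$ that are compatible with respect to $\mathbb{C}X$, meaning there is a basis of $\mathbb{C}X$ that is symmetry adapted with respect to $\mathcal{R}(G_i)$ (for $\mathbb{C}X$ restricted to $G_i$) for every $i$. For $1\le j\le n$, $\mathcal{B}_j$ is an orbital symmetry adapted basis with respect to $\mathcal{R}(G_1),\dots,\mathcal{R}(G_j)$: $\mathcal{B}_j$ is the disjoint union, over the $G_j$-orbits $Y\subseteq X$, of bases of $\mathbb{C}Y$, each of which is symmetry adapted with respect to $\mathcal{R}(G_i)$ for every $i\le j$; and $\mathcal{B}_1$ is the standard basis. For bases $\mathcal{B},\mathcal{B}'$ of a vector space $V$, $[v]_{\mathcal{B}}$ is the coordinate vector and $C(\mathcal{B},\mathcal{B}')$ is the matrix with $C(\mathcal{B},\mathcal{B}')[v]_{\mathcal{B}'}=[v]_{\mathcal{B}}$ for all $v$. For a matrix $A$, $\nu(A)$ is the number of nonzero entries of $A$. For subgroups $H\le K\le G$ with $K$ acting transitively on a finite set $Y$, write $\mathbb{C}Y\cong\kappa_1N_1\oplus\cdots\oplus\kappa_sN_s$ as $\mathbb{C}H$-modules where $N_1,\dots,N_s$ are a complete set of irreducible $\mathbb{C}H$-modules; set $K_Y(K,H)=\max\{\kappa_1,\dots,\kappa_s\}$ and $\Phi_Y(K,H)=\sum_{i=1}^s\kappa_i^2\dim N_i$. If $K$ acts on $X$ with orbits $X_1,\dots,X_t$, set $\Phi_X(K,H)=\sum_{i=1}^t\Phi_{X_i}(K,H)$ and $K_X(K,H)=\max_i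 K_{X_i}(K,H)$. *)

theory Defs
  imports "HOL-Algebra.Group_Action" Complex_Main
begin

section \<open>Matrices over C (as extensional functions on index pairs)\<close>

definition mat_mult :: "nat \<Rightarrow> (nat \<Rightarrow> nat \<Rightarrow> complex) \<Rightarrow> (nat \<Rightarrow> nat \<Rightarrow> complex) \<Rightarrow> nat \<Rightarrow> nat \<Rightarrow> complex"
  where "mat_mult d A B = (\<lambda>i k. \<Sum>l<d. A i l * B l k)"

definition mat_id :: "nat \<Rightarrow> nat \<Rightarrow> nat \<Rightarrow> complex"
  where "mat_id d = (\<lambda>i k. if i = k \<and> i < d then 1 else 0)"

definition mat_vec :: "nat \<Rightarrow> (nat \<Rightarrow> nat \<Rightarrow> complex) \<Rightarrow> (nat \<Rightarrow> complex) \<Rightarrow> nat \<Rightarrow> complex"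
  where "mat_vec d A v = (\<lambda>i. \<Sum>l<d. A i l * v l)"

text \<open>Vectors of C^d: functions nat => complex vanishing from position d on.\<close>
definition cvec :: "nat \<Rightarrow> (nat \<Rightarrow> complex) set"
  where "cvec d = {v. \<forall>i\<ge>d. v i = 0}"

text \<open>A matrix representation of degree d is a pair (d, rho).\<close>
type_synonym 'g mrep = "nat \<times> ('g \<Rightarrow> nat \<Rightarrow> nat \<Rightarrow> complex)"

definition is_mrep :: "('g, 'm) monoid_scheme \<Rightarrow> 'g set \<Rightarrow> 'g mrep \<Rightarrow> bool"
  where "is_mrep G H r \<longleftrightarrow> (let d = fst r; \<rho> = snd r in
     0 < d \<and>
     (\<forall>h\<in>H. \<forall>i k. (d \<le> i \<or> d \<le> k) \<longrightarrow> \<rho> h i k = 0) \<and>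
     \<rho> \<one>\<^bsub>G\<^esub> = mat_id d \<and>
     (\<forall>h1\<in>H. \<forall>h2\<in>H. \<rho> (h1 \<otimes>\<^bsub>G\<^esub> h2) = mat_mult d (\<rho> h1) (\<rho> h2)))"

definition irreducible_mrep :: "('g, 'm) monoid_scheme \<Rightarrow> 'g set \<Rightarrow> 'g mrep \<Rightarrow> bool"
  where "irreducible_mrep G H r \<longleftrightarrow> is_mrep G H r \<and>
     (\<forall>W. W \<subseteq> cvec (fst r) \<and> (\<lambda>_. 0) \<in> W \<and>
          (\<forall>v\<in>W. \<forall>w\<in>W. (\<lambda>i. v i + w i) \<in> W) \<and>
          (\<forall>c. \<forall>v\<in>W. (\<lambda>i. c * v i) \<in> W) \<and>
          (\<forall>h\<in>H. \<forall>v\<in>W. mat_vec (fst r) (snd r h) v \<in> W)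
        \<longrightarrow> W = {\<lambda>_. 0} \<or> W = cvec (fst r))"

definition equiv_mrep :: "'g set \<Rightarrow> 'g mrep \<Rightarrow> 'g mrep \<Rightarrow> bool"
  where "equiv_mrep H r s \<longleftrightarrow> fst r = fst s \<and>
     (\<exists>P Q. mat_mult (fst r) P Q = mat_id (fst r) \<and> mat_mult (fst r) Q P = mat_id (fst r) \<and>
        (\<forall>h\<in>H. mat_mult (fst r) P (snd r h) = mat_mult (fst r) (snd s h) P))"

definition complete_irreps :: "('g, 'm) monoid_scheme \<Rightarrow> 'g set \<Rightarrow> 'g mrep set \<Rightarrow> bool"
  where "complete_irreps G H R \<longleftrightarrow>
     (\<forall>r\<in>R. irreducible_mrep G H r) \<and>
     (\<forall>r\<in>R. \<forall>s\<in>R. r \<noteq> s \<longrightarrow> \<not> equiv_mrep H r s) \<and>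
     (\<forall>r. irreducible_mrep G H r \<longrightarrow> (\<exists>s\<in>R. equiv_mrep H r s))"

text \<open>Elements of CX are functions 'x => complex vanishing outside X.\<close>
definition CV :: "'x set \<Rightarrow> ('x \<Rightarrow> complex) set"
  where "CV Y = {f. \<forall>x. x \<notin> Y \<longrightarrow> f x = 0}"

definition indic :: "'x \<Rightarrow> 'x \<Rightarrow> complex"
  where "indic x = (\<lambda>y. if y = x then 1 else 0)"

definition fun_act :: "('g, 'm) monoid_scheme \<Rightarrow> 'x set \<Rightarrow> ('g \<Rightarrow> 'x \<Rightarrow> 'x) \<Rightarrow> 'g \<Rightarrow> ('x \<Rightarrow> complex) \<Rightarrow> 'x \<Rightarrow> complex"
  where "fun_act G X \<phi> g f = (\<lambda>x. if x \<in> X then f (\<phi> (inv\<^bsub>G\<^esub> g) x) else 0)"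

definition lin_comb :: "('x \<Rightarrow> complex) list \<Rightarrow> (nat \<Rightarrow> complex) \<Rightarrow> 'x \<Rightarrow> complex"
  where "lin_comb B c = (\<lambda>x. \<Sum>i<length B. c i * (B ! i) x)"

definition is_basis :: "'x set \<Rightarrow> ('x \<Rightarrow> complex) list \<Rightarrow> bool"
  where "is_basis Y B \<longleftrightarrow> set B \<subseteq> CV Y \<and>
     (\<forall>c. lin_comb B c = (\<lambda>_. 0) \<longrightarrow> (\<forall>i<length B. c i = 0)) \<and>
     (\<forall>v\<in>CV Y. \<exists>c. v = lin_comb B c)"

definition coord :: "('x \<Rightarrow> complex) list \<Rightarrow> ('x \<Rightarrow> complex) \<Rightarrow> nat \<Rightarrow> complex"
  where "coord B v = (THE c. v = lin_comb B c \<and> (\<forall>i\<ge>length B. c i = 0))"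

text \<open>Change of basis matrix C(B,B'): C [v]_B' = [v]_B, i.e. column k is [B' ! k]_B.\<close>
definition change_basis :: "('x \<Rightarrow> complex) list \<Rightarrow> ('x \<Rightarrow> complex) list \<Rightarrow> nat \<Rightarrow> nat \<Rightarrow> complex"
  where "change_basis B B' = (\<lambda>i k. coord B (B' ! k) i)"

definition nnz :: "nat \<Rightarrow> nat \<Rightarrow> (nat \<Rightarrow> nat \<Rightarrow> complex) \<Rightarrow> nat"
  where "nnz m n A = card {(i, k). i < m \<and> k < n \<and> A i k \<noteq> 0}"

fun bdiag :: "'g mrep list \<Rightarrow> 'g \<Rightarrow> nat \<Rightarrow> nat \<Rightarrow> complex" where
  "bdiag [] h i k = 0"
| "bdiag (r # rs) h i k =
     (if i < fst r \<and> k < fst r then snd r h i k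
      else if fst r \<le> i \<and> fst r \<le> k then bdiag rs h (i - fst r) (k - fst r) else 0)"

definition adapted_blocks :: "('g, 'm) monoid_scheme \<Rightarrow> 'x set \<Rightarrow> ('g \<Rightarrow> 'x \<Rightarrow> 'x) \<Rightarrow> 'g set
    \<Rightarrow> ('x \<Rightarrow> complex) list \<Rightarrow> 'g mrep list \<Rightarrow> bool"
  where "adapted_blocks G X \<phi> H B bs \<longleftrightarrow> sum_list (map fst bs) = length B \<and>
     (\<forall>h\<in>H. \<forall>k<length B. fun_act G X \<phi> h (B ! k) = lin_comb B (\<lambda>i. bdiag bs h i k))"

definition sym_adapted :: "('g, 'm) monoid_scheme \<Rightarrow> 'x set \<Rightarrow> ('g \<Rightarrow> 'x \<Rightarrow> 'x) \<Rightarrow> 'g set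
    \<Rightarrow> 'g mrep set \<Rightarrow> 'x set \<Rightarrow> ('x \<Rightarrow> complex) list \<Rightarrow> bool"
  where "sym_adapted G X \<phi> H R Y B \<longleftrightarrow> is_basis Y B \<and>
     (\<exists>bs. set bs \<subseteq> R \<and> adapted_blocks G X \<phi> H B bs)"

definition sub_orbits :: "'g set \<Rightarrow> 'x set \<Rightarrow> ('g \<Rightarrow> 'x \<Rightarrow> 'x) \<Rightarrow> 'x set set"
  where "sub_orbits H X \<phi> = {{\<phi> h x | h. h \<in> H} | x. x \<in> X}"

definition orbital_sa :: "('g, 'm) monoid_scheme \<Rightarrow> 'x set \<Rightarrow> ('g \<Rightarrow> 'x \<Rightarrow> 'x)
    \<Rightarrow> (nat \<Rightarrow> 'g set) \<Rightarrow> (nat \<Rightarrow> 'g mrep set) \<Rightarrow> nat \<Rightarrow> ('x \<Rightarrow> complex) list \<Rightarrow> bool"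
  where "orbital_sa G X \<phi> Gs Rs j B \<longleftrightarrow>
     (\<exists>Ys Cs. length Ys = length Cs \<and> distinct Ys \<and> set Ys = sub_orbits (Gs j) X \<phi> \<and>
        B = concat Cs \<and>
        (\<forall>l<length Ys. \<forall>i\<in>{1..j}. sym_adapted G X \<phi> (Gs i) (Rs i) (Ys ! l) (Cs ! l)))"

text \<open>Multiplicity of the irreducible (given by r in R(H)) in CY as a CH-module: the number of
  summands isomorphic to r in a decomposition of CY into irreducible CH-submodules
  (each summand given by a block of basis vectors on which H acts by a member of R).\<close>
definition mult :: "('g, 'm) monoid_scheme \<Rightarrow> 'x set \<Rightarrow> ('g \<Rightarrow> 'x \<Rightarrow> 'x) \<Rightarrow> 'g set
    \<Rightarrow> 'g mrep set \<Rightarrow> 'x set \<Rightarrow> 'g mrep \<Rightarrow> nat"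
  where "mult G X \<phi> H R Y r = (THE \<kappa>. \<exists>B bs. is_basis Y B \<and> set bs \<subseteq> R \<and>
      adapted_blocks G X \<phi> H B bs \<and> length (filter (\<lambda>s. s = r) bs) = \<kappa>)"

definition PhiY :: "('g, 'm) monoid_scheme \<Rightarrow> 'x set \<Rightarrow> ('g \<Rightarrow> 'x \<Rightarrow> 'x) \<Rightarrow> 'g set
    \<Rightarrow> 'g mrep set \<Rightarrow> 'x set \<Rightarrow> nat"
  where "PhiY G X \<phi> H R Y = (\<Sum>r\<in>R. (mult G X \<phi> H R Y r)\<^sup>2 * fst r)"

definition KY :: "('g, 'm) monoid_scheme \<Rightarrow> 'x set \<Rightarrow> ('g \<Rightarrow> 'x \<Rightarrow> 'x) \<Rightarrow> 'g set
    \<Rightarrow> 'g mrep set \<Rightarrow> 'x set \<Rightarrow> nat"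
  where "KY G X \<phi> H R Y = Max ((\<lambda>r. mult G X \<phi> H R Y r) ` R)"

definition PhiX :: "('g, 'm) monoid_scheme \<Rightarrow> 'x set \<Rightarrow> ('g \<Rightarrow> 'x \<Rightarrow> 'x) \<Rightarrow> 'g set \<Rightarrow> 'g set
    \<Rightarrow> 'g mrep set \<Rightarrow> nat"
  where "PhiX G X \<phi> K H R = (\<Sum>Y\<in>sub_orbits K X \<phi>. PhiY G X \<phi> H R Y)"

definition KX :: "('g, 'm) monoid_scheme \<Rightarrow> 'x set \<Rightarrow> ('g \<Rightarrow> 'x \<Rightarrow> 'x) \<Rightarrow> 'g set \<Rightarrow> 'g set
    \<Rightarrow> 'g mrep set \<Rightarrow> nat"
  where "KX G X \<phi> K H R = Max ((\<lambda>Y. KY G X \<phi> H R Y) ` sub_orbits K X \<phi>)"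

end

theory Submission
  imports Defs "HOL-Library.Function_Algebras" "Jordan_Normal_Form.Spectral_Radius"
begin



fun bk :: "nat list \<Rightarrow> nat \<Rightarrow> nat" where
  "bk [] i = 0"
| "bk (d # ds) i = (if i < d then 0 else Suc (bk ds (i - d)))"

fun ps :: "nat list \<Rightarrow> nat \<Rightarrow> nat" where
  "ps [] i = i"
| "ps (d # ds) i = (if i < d then i else ps ds (i - d))"

definition off :: "nat list \<Rightarrow> nat \<Rightarrow> nat" where
  "off ds a = sum_list (take a ds)"

lemma bk_ps_props:
  "i < sum_list ds \<Longrightarrow> bk ds i < length ds \<and> ps ds i < ds ! bk ds i \<and> off ds (bk ds i) + ps ds i = i"
proof (induction ds arbitrary: i)
  case Nil then show ?case by simp
next
  case (Cons d ds)
  show ?case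
  proof (cases "i < d")
    case True then show ?thesis by (simp add: off_def)
  next
    case False
    with Cons.prems have "i - d < sum_list ds" by simp
    from Cons.IH[OF this] False show ?thesis by (auto simp: off_def)
  qed
qed

lemma bk_ps_off:
  "a < length ds \<Longrightarrow> p < ds ! a \<Longrightarrow> bk ds (off ds a + p) = a \<and> ps ds (off ds a + p) = p"
proof (induction ds arbitrary: a)
  case Nil then show ?case by simp
next
  case (Cons d ds)
  show ?case
  proof (cases a)
    case 0 then show ?thesis using Cons by (simp add: off_def)
  next
    case (Suc b)
    then have "b < length ds" "p < ds ! b" using Cons.prems by auto
    from Cons.IH[OF this] Suc show ?thesis by (auto simp: off_def)
  qed
qed

lemma off_lt: "a < length ds \<Longrightarrow> p < ds ! a \<Longrightarrow> off ds a + p < sum_list ds"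
proof (induction ds arbitrary: a)
  case Nil then show ?case by simp
next
  case (Cons d ds)
  then show ?case by (cases a) (auto simp: off_def)
qed

lemma bk_inj:
  assumes "i < sum_list ds" "k < sum_list ds" "bk ds i = bk ds k" "ps ds i = ps ds k"
  shows "i = k"
  using bk_ps_props[OF assms(1)] bk_ps_props[OF assms(2)] assms(3,4) by metis

lemma bij_seg:
  assumes "a < length ds"
  shows "bij_betw (\<lambda>p. off ds a + p) {..<ds ! a} {i. i < sum_list ds \<and> bk ds i = a}"
  unfolding bij_betw_def
proof
  show "inj_on (\<lambda>p. off ds a + p) {..<ds ! a}" by (auto simp: inj_on_def)
  show "(\<lambda>p. off ds a + p) ` {..<ds ! a} = {i. i < sum_list ds \<and> bk ds i = a}"
  proof (intro equalityI subsetI)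
    fix i assume "i \<in> (\<lambda>p. off ds a + p) ` {..<ds ! a}"
    then show "i \<in> {i. i < sum_list ds \<and> bk ds i = a}"
      using bk_ps_off[OF assms] off_lt[OF assms] by auto
  next
    fix i assume "i \<in> {i. i < sum_list ds \<and> bk ds i = a}"
    then show "i \<in> (\<lambda>p. off ds a + p) ` {..<ds ! a}"
      using bk_ps_props[of i ds] by (auto intro!: image_eqI[where x="ps ds i"])
  qed
qed

lemma sum_seg:
  assumes "a < length ds"
  shows "(\<Sum>i\<in>{i. i < sum_list ds \<and> bk ds i = a}. f i) = (\<Sum>p<ds ! a. f (off ds a + p))"
  using sum.reindex_bij_betw[OF bij_seg[OF assms], of f] by simp

lemma sum_seg_only:
  assumes "a < length ds" "\<And>i. i < sum_list ds \<Longrightarrow> bk ds i \<noteq> a \<Longrightarrow> f i = 0"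
  shows "(\<Sum>i<sum_list ds. f i) = (\<Sum>p<ds ! a. f (off ds a + p))"
proof -
  have "(\<Sum>i<sum_list ds. f i) = (\<Sum>i\<in>{i. i < sum_list ds \<and> bk ds i = a}. f i)"
    by (rule sum.mono_neutral_right) (use assms(2) in auto)
  then show ?thesis using sum_seg[OF assms(1)] by simp
qed

lemma card_pos_class:
  shows "card {i. i < sum_list ds \<and> P (bk ds i) \<and> ps ds i = q} = card {a. a < length ds \<and> P a \<and> q < ds ! a}"
proof -
  have "bij_betw (\<lambda>a. off ds a + q) {a. a < length ds \<and> P a \<and> q < ds ! a} {i. i < sum_list ds \<and> P (bk ds i) \<and> ps ds i = q}"
    unfolding bij_betw_def
  proof
    show "inj_on (\<lambda>a. off ds a + q) {a. a < length ds \<and> P a \<and> q < ds ! a}"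
      by (auto simp: inj_on_def dest: bk_ps_off) (metis bk_ps_off)
    show "(\<lambda>a. off ds a + q) ` {a. a < length ds \<and> P a \<and> q < ds ! a} = {i. i < sum_list ds \<and> P (bk ds i) \<and> ps ds i = q}"
    proof (intro equalityI subsetI)
      fix i assume "i \<in> (\<lambda>a. off ds a + q) ` {a. a < length ds \<and> P a \<and> q < ds ! a}"
      then show "i \<in> {i. i < sum_list ds \<and> P (bk ds i) \<and> ps ds i = q}"
        using bk_ps_off off_lt by auto
    next
      fix i assume i: "i \<in> {i. i < sum_list ds \<and> P (bk ds i) \<and> ps ds i = q}"
      then show "i \<in> (\<lambda>a. off ds a + q) ` {a. a < length ds \<and> P a \<and> q < ds ! a}"
        using bk_ps_props[of i ds] by (auto intro!: image_eqI[where x="bk ds i"])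
    qed
  qed
  then show ?thesis by (simp add: bij_betw_same_card)
qed

lemma nth_concat_bk:
  "i < length (concat Cs) \<Longrightarrow> concat Cs ! i = Cs ! bk (map length Cs) i ! ps (map length Cs) i"
proof (induction Cs arbitrary: i)
  case Nil then show ?case by simp
next
  case (Cons c Cs)
  then show ?case by (auto simp: nth_append)
qed

lemma length_concat_sum: "length (concat Cs) = sum_list (map length Cs)"
  by (simp add: length_concat)

lemma bdiag_out: "sum_list (map fst bs) \<le> i \<Longrightarrow> bdiag bs h i k = 0"
  by (induction bs arbitrary: i k) auto

lemma bdiag_bk:
  assumes "i < sum_list (map fst bs)" "k < sum_list (map fst bs)"
  shows "bdiag bs h i k = (if bk (map fst bs) i = bk (map fst bs) k
     then snd (bs ! bk (map fst bs) k) h (ps (map fst bs) i) (ps (map fst bs) k) else 0)"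
  using assms
proof (induction bs arbitrary: i k)
  case Nil then show ?case by simp
next
  case (Cons r bs)
  then show ?case by (auto simp: not_less)
qed




interpretation fv: vector_space "(\<lambda>c (f::'a\<Rightarrow>complex) x. c * f x)"
  by unfold_locales (auto simp: algebra_simps fun_eq_iff)

lemma sum_fun_apply: "(\<Sum>a\<in>A. f a) x = (\<Sum>a\<in>A. f a x)"
  by (induction A rule: infinite_finite_induct) auto

lemma rank_le:
  fixes A Bm :: "nat \<Rightarrow> nat \<Rightarrow> complex"
  assumes fI: "finite I" and fJ: "finite J"
    and id: "\<And>i i'. i \<in> I \<Longrightarrow> i' \<in> I \<Longrightarrow> (\<Sum>k\<in>J. A i k * Bm k i') = (if i = i' then 1 else 0)"
  shows "card I \<le> card J"
proof -
  define e :: "nat \<Rightarrow> nat \<Rightarrow> complex" where "e i = (\<lambda>t. if t = i then 1 else 0)" for i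
  define a :: "nat \<Rightarrow> nat \<Rightarrow> complex" where "a k = (\<lambda>t. if t \<in> I then A t k else 0)" for k
  have ei: "e i = (\<Sum>k\<in>J. (\<lambda>x. Bm k i * a k x))" if "i \<in> I" for i
  proof
    fix t
    show "e i t = (\<Sum>k\<in>J. (\<lambda>x. Bm k i * a k x)) t"
    proof (cases "t \<in> I")
      case True
      then show ?thesis unfolding sum_fun_apply using id[OF True that]
        by (auto simp: e_def a_def mult.commute)
    next
      case False
      then have "t \<noteq> i" using that by auto
      then show ?thesis unfolding sum_fun_apply using False by (auto simp: e_def a_def)
    qed
  qed
  have sp: "e ` I \<subseteq> fv.span (a ` J)"
  proof
    fix v assume "v \<in> e ` I"
    then obtain i where i: "i \<in> I" "v = e i" by auto
    show "v \<in> fv.span (a ` J)"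
      unfolding i(2) ei[OF i(1)]
      by (intro fv.span_sum fv.span_scale fv.span_base) auto
  qed
  have ind: "fv.independent (e ` I)"
    unfolding fv.independent_explicit_module
  proof (intro allI impI)
    fix t u v
    assume h1: "finite t" and h2: "t \<subseteq> e ` I" and h3: "(\<Sum>v\<in>t. (\<lambda>x. u v * v x)) = 0" and h4: "v \<in> t"
    note h = h1 h2 h3 h4
    then obtain i where i: "i \<in> I" "v = e i" by auto
    have "(\<Sum>w\<in>t. (\<lambda>x. u w * w x)) i = 0" using h by simp
    then have "(\<Sum>w\<in>t. u w * w i) = 0" by (simp add: sum_fun_apply)
    moreover have "(\<Sum>w\<in>t. u w * w i) = u v"
    proof -
      have "(\<Sum>w\<in>t. u w * w i) = (\<Sum>w\<in>{v}. u w * w i)"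
      proof (rule sum.mono_neutral_right)
        show "\<forall>w\<in>t - {v}. u w * w i = 0"
        proof
          fix w assume w: "w \<in> t - {v}"
          then obtain i' where "i' \<in> I" "w = e i'" using h by auto
          with w i have "i' \<noteq> i" by auto
          then show "u w * w i = 0" using \<open>w = e i'\<close> by (simp add: e_def)
        qed
      qed (use h in auto)
      also have "\<dots> = u v" using i by (simp add: e_def)
      finally show ?thesis .
    qed
    ultimately show "u v = 0" by simp
  qed
  have "finite (e ` I) \<and> card (e ` I) \<le> card (a ` J)"
    by (rule fv.independent_span_bound[OF _ ind sp]) (use fJ in auto)
  moreover have "inj_on e I" by (auto simp: inj_on_def e_def fun_eq_iff)
  ultimately have "card I \<le> card (a ` J)" by (simp add: card_image)
  also have "\<dots> \<le> card J" by (rule card_image_le[OF fJ])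
  finally show ?thesis .
qed

lemma rank_eq:
  fixes A Bm :: "nat \<Rightarrow> nat \<Rightarrow> complex"
  assumes fI: "finite I" and fJ: "finite J"
    and id1: "\<And>i i'. i \<in> I \<Longrightarrow> i' \<in> I \<Longrightarrow> (\<Sum>k\<in>J. A i k * Bm k i') = (if i = i' then 1 else 0)"
    and id2: "\<And>k k'. k \<in> J \<Longrightarrow> k' \<in> J \<Longrightarrow> (\<Sum>i\<in>I. Bm k i * A i k') = (if k = k' then 1 else 0)"
  shows "card I = card J"
  using rank_le[OF fI fJ id1] rank_le[OF fJ fI id2] by simp

lemma lin_comb_sub: "lin_comb B (\<lambda>i. c i - c' i) = (\<lambda>x. lin_comb B c x - lin_comb B c' x)"
  unfolding lin_comb_def by (auto simp: algebra_simps sum_subtractf)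

lemma basis_coeff_eq:
  assumes "is_basis Y B" "lin_comb B c = lin_comb B c'" "i < length B"
  shows "c i = c' i"
proof -
  have "lin_comb B (\<lambda>i. c i - c' i) = (\<lambda>_. 0)" using assms(2) by (simp add: lin_comb_sub)
  then have "c i - c' i = 0" using assms(1,3) unfolding is_basis_def by blast
  then show ?thesis by simp
qed

lemma coord_eq:
  assumes "is_basis Y B" "v = lin_comb B c" "\<And>i. length B \<le> i \<Longrightarrow> c i = 0"
  shows "coord B v = c"
  unfolding coord_def
proof (rule the_equality)
  show "v = lin_comb B c \<and> (\<forall>i\<ge>length B. c i = 0)" using assms by auto
  fix c' assume h: "v = lin_comb B c' \<and> (\<forall>i\<ge>length B. c' i = 0)"
  show "c' = c"
  proof
    fix i show "c' i = c i"
      using basis_coeff_eq[OF assms(1), of c' c i] h assms by (cases "i < length B") auto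
  qed
qed

lemma lin_comb_trunc: "lin_comb B c = lin_comb B (\<lambda>i. if i < length B then c i else 0)"
  unfolding lin_comb_def by auto

lemma coord_ex:
  assumes "is_basis Y B" "v \<in> CV Y"
  shows "v = lin_comb B (coord B v) \<and> (\<forall>i. length B \<le> i \<longrightarrow> coord B v i = 0)"
proof -
  obtain c where c: "v = lin_comb B c" using assms unfolding is_basis_def by blast
  let ?c = "\<lambda>i. if i < length B then c i else 0"
  have "coord B v = ?c" by (rule coord_eq[OF assms(1)]) (use c lin_comb_trunc in auto)
  then show ?thesis using c lin_comb_trunc[of B c] by auto
qed

lemma coord_out: "is_basis Y B \<Longrightarrow> v \<in> CV Y \<Longrightarrow> length B \<le> i \<Longrightarrow> coord B v i = 0"
  using coord_ex by blast

lemma basis_in_CV: "is_basis Y B \<Longrightarrow> k < length B \<Longrightarrow> B ! k \<in> CV Y"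
  unfolding is_basis_def by auto

lemma lin_comb_unit:
  assumes "k < length B" shows "lin_comb B (\<lambda>i. if i = k then 1 else 0) = B ! k"
proof
  fix x
  have "lin_comb B (\<lambda>i. if i = k then 1 else 0) x = (\<Sum>i\<in>{k}. (if i = k then 1 else 0) * (B ! i) x)"
    unfolding lin_comb_def by (rule sum.mono_neutral_right) (use assms in auto)
  then show "lin_comb B (\<lambda>i. if i = k then 1 else 0) x = (B ! k) x" by simp
qed

lemma coord_nth:
  assumes "is_basis Y B" "k < length B"
  shows "coord B (B ! k) = (\<lambda>i. if i = k then 1 else 0)"
  by (rule coord_eq[OF assms(1)]) (use lin_comb_unit[OF assms(2)] assms(2) in auto)

lemma coord_zero: "is_basis Y B \<Longrightarrow> coord B (\<lambda>_. 0) = (\<lambda>_. 0)"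
  by (rule coord_eq) (auto simp: lin_comb_def)

lemma change_prod:
  assumes B: "is_basis Y B" and B': "is_basis Y B'" and i: "i < length B" and i': "i' < length B"
  shows "(\<Sum>k<length B'. coord B (B' ! k) i * coord B' (B ! i') k) = (if i = i' then 1 else 0)"
proof -
  let ?c' = "coord B' (B ! i')"
  let ?d = "\<lambda>i. (\<Sum>k<length B'. coord B (B' ! k) i * ?c' k)"
  have v: "B ! i' \<in> CV Y" by (rule basis_in_CV[OF B i'])
  have e1: "B ! i' = lin_comb B' ?c'" using coord_ex[OF B' v] by blast
  have bk: "B' ! k = lin_comb B (coord B (B' ! k))" if "k < length B'" for k
    using coord_ex[OF B basis_in_CV[OF B' that]] by blast
  have "B ! i' = lin_comb B ?d"
  proof
    fix x
    have "(B ! i') x = (\<Sum>k<length B'. ?c' k * (B' ! k) x)"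
      by (subst e1) (simp add: lin_comb_def)
    also have "\<dots> = (\<Sum>k<length B'. ?c' k * lin_comb B (coord B (B' ! k)) x)"
      by (rule sum.cong) (use bk in auto)
    also have "\<dots> = (\<Sum>k<length B'. \<Sum>l<length B. ?c' k * (coord B (B' ! k) l * (B ! l) x))"
      by (simp add: lin_comb_def sum_distrib_left)
    also have "\<dots> = (\<Sum>l<length B. \<Sum>k<length B'. ?c' k * (coord B (B' ! k) l * (B ! l) x))"
      by (rule sum.swap)
    also have "\<dots> = lin_comb B ?d x"
      unfolding lin_comb_def sum_distrib_right by (auto intro!: sum.cong simp: mult.commute mult.left_commute)
    finally show "(B ! i') x = lin_comb B ?d x" .
  qed
  moreover have "?d l = 0" if "length B \<le> l" for l
    using coord_out[OF B basis_in_CV[OF B'] that] by simp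
  ultimately have "coord B (B ! i') = ?d" by (intro coord_eq[OF B]) auto
  then have "?d i = coord B (B ! i') i" by simp
  also have "\<dots> = (if i = i' then 1 else 0)" using coord_nth[OF B i'] by simp
  finally show ?thesis by (simp add: mult.commute)
qed

lemma basis_length_eq:
  assumes B: "is_basis Y B" and B': "is_basis Y B'"
  shows "length B = length B'"
proof -
  have "card {..<length B} = card {..<length B'}"
    by (rule rank_eq[where A="\<lambda>i k. coord B (B' ! k) i" and Bm="\<lambda>k i. coord B' (B ! i) k"])
       (use change_prod[OF B B'] change_prod[OF B' B] in \<open>auto simp: mult.commute\<close>)
  then show ?thesis by simp
qed

lemma indic_basis:
  assumes "distinct xs"
  shows "is_basis (set xs) (map indic xs)"
  unfolding is_basis_def
proof (intro conjI allI impI ballI)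
  show "set (map indic xs) \<subseteq> CV (set xs)" by (auto simp: CV_def indic_def)
next
  fix c i assume h: "lin_comb (map indic xs) c = (\<lambda>_. 0)" "i < length (map indic xs)"
  have "lin_comb (map indic xs) c (xs ! i) = c i"
  proof -
    have "lin_comb (map indic xs) c (xs ! i) = (\<Sum>l<length xs. c l * (if xs ! i = xs ! l then 1 else 0))"
      by (simp add: lin_comb_def indic_def)
    also have "\<dots> = (\<Sum>l\<in>{i}. c l * (if xs ! i = xs ! l then 1 else 0))"
      by (rule sum.mono_neutral_right) (use h(2) assms in \<open>auto simp: nth_eq_iff_index_eq\<close>)
    finally show ?thesis by simp
  qed
  then show "c i = 0" using h by simp
next
  fix v assume v: "v \<in> CV (set xs)"
  show "\<exists>c. v = lin_comb (map indic xs) c"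
  proof (intro exI ext)
    fix x
    show "v x = lin_comb (map indic xs) (\<lambda>l. v (xs ! l)) x"
    proof (cases "x \<in> set xs")
      case True
      then obtain i where i: "i < length xs" "xs ! i = x" by (auto simp: in_set_conv_nth)
      have "lin_comb (map indic xs) (\<lambda>l. v (xs ! l)) x = (\<Sum>l<length xs. v (xs ! l) * (if x = xs ! l then 1 else 0))"
        by (simp add: lin_comb_def indic_def)
      also have "\<dots> = (\<Sum>l\<in>{i}. v (xs ! l) * (if x = xs ! l then 1 else 0))"
        by (rule sum.mono_neutral_right) (use i assms in \<open>auto simp: nth_eq_iff_index_eq\<close>)
      finally show ?thesis using i by simp
    next
      case False
      then show ?thesis using v nth_mem[of _ xs] unfolding lin_comb_def indic_def CV_def
        by (auto intro!: sum.neutral)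
    qed
  qed
qed

lemma basis_length_card:
  assumes "finite X" "is_basis X B"
  shows "length B = card X"
proof -
  obtain xs where xs: "distinct xs" "set xs = X" using assms(1) finite_distinct_list by blast
  have "length B = length (map indic xs)"
    using basis_length_eq[OF assms(2)] indic_basis[OF xs(1)] xs(2) by blast
  then show ?thesis using xs by (metis distinct_card length_map)
qed




lemma mat_vec_assoc: "mat_vec n A (mat_vec m B v) = mat_vec m (mat_mult n A B) v"
proof
  fix i
  have "mat_vec n A (mat_vec m B v) i = (\<Sum>l<n. \<Sum>t<m. A i l * (B l t * v t))"
    by (simp add: mat_vec_def sum_distrib_left)
  also have "\<dots> = (\<Sum>t<m. \<Sum>l<n. A i l * (B l t * v t))" by (rule sum.swap)
  also have "\<dots> = mat_vec m (mat_mult n A B) v i"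
    by (simp add: mat_vec_def mat_mult_def sum_distrib_right mult.assoc)
  finally show "mat_vec n A (mat_vec m B v) i = mat_vec m (mat_mult n A B) v i" .
qed

lemma mat_vec_add: "mat_vec d A (\<lambda>i. v i + w i) = (\<lambda>i. mat_vec d A v i + mat_vec d A w i)"
  by (simp add: mat_vec_def algebra_simps sum.distrib)

lemma mat_vec_scale: "mat_vec d A (\<lambda>i. c * v i) = (\<lambda>i. c * mat_vec d A v i)"
  by (simp add: mat_vec_def algebra_simps sum_distrib_left)

lemma mat_vec_diff: "mat_vec d A (\<lambda>i. v i - w i) = (\<lambda>i. mat_vec d A v i - mat_vec d A w i)"
  by (simp add: mat_vec_def algebra_simps sum_subtractf)

lemma mat_vec_zero: "mat_vec d A (\<lambda>_. 0) = (\<lambda>_. 0)"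
  by (simp add: mat_vec_def)

definition uv :: "nat \<Rightarrow> nat \<Rightarrow> complex" where "uv k = (\<lambda>i. if i = k then 1 else 0)"

lemma uv_cvec: "k < d \<Longrightarrow> uv k \<in> cvec d" by (auto simp: uv_def cvec_def)

lemma mat_vec_uv: "k < d \<Longrightarrow> mat_vec d M (uv k) = (\<lambda>i. M i k)"
proof
  fix i assume k: "k < d"
  have "mat_vec d M (uv k) i = (\<Sum>l\<in>{k}. M i l * uv k l)"
    unfolding mat_vec_def by (rule sum.mono_neutral_right) (use k in \<open>auto simp: uv_def\<close>)
  then show "mat_vec d M (uv k) i = M i k" by (simp add: uv_def)
qed

lemma mat_vec_cvec:
  assumes "\<forall>i k. e \<le> i \<longrightarrow> M i k = 0"
  shows "mat_vec d M v \<in> cvec e"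
  using assms by (auto simp: mat_vec_def cvec_def)

lemma mat_vec_id: "v \<in> cvec d \<Longrightarrow> mat_vec d (mat_id d) v = v"
proof
  fix i assume v: "v \<in> cvec d"
  show "mat_vec d (mat_id d) v i = v i"
  proof (cases "i < d")
    case True
    have "mat_vec d (mat_id d) v i = (\<Sum>l\<in>{i}. mat_id d i l * v l)"
      unfolding mat_vec_def by (rule sum.mono_neutral_right) (use True in \<open>auto simp: mat_id_def\<close>)
    then show ?thesis using True by (simp add: mat_id_def)
  next
    case False then show ?thesis using v by (simp add: mat_vec_def mat_id_def cvec_def)
  qed
qed

lemma mat_mult_id_right:
  assumes "\<forall>i k. d \<le> k \<longrightarrow> A i k = 0"
  shows "mat_mult d A (mat_id d) = A"
proof (intro ext)
  fix i k
  show "mat_mult d A (mat_id d) i k = A i k"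
  proof (cases "k < d")
    case True
    have "mat_mult d A (mat_id d) i k = (\<Sum>l\<in>{k}. A i l * mat_id d l k)"
      unfolding mat_mult_def by (rule sum.mono_neutral_right) (use True in \<open>auto simp: mat_id_def\<close>)
    then show ?thesis using True by (simp add: mat_id_def)
  next
    case False then show ?thesis using assms by (simp add: mat_mult_def mat_id_def)
  qed
qed

lemma mat_mult_id_left:
  assumes "\<forall>i k. d \<le> i \<longrightarrow> A i k = 0"
  shows "mat_mult d (mat_id d) A = A"
proof (intro ext)
  fix i k
  show "mat_mult d (mat_id d) A i k = A i k"
  proof (cases "i < d")
    case True
    have "mat_mult d (mat_id d) A i k = (\<Sum>l\<in>{i}. mat_id d i l * A l k)"
      unfolding mat_mult_def by (rule sum.mono_neutral_right) (use True in \<open>auto simp: mat_id_def\<close>)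
    then show ?thesis using True by (simp add: mat_id_def)
  next
    case False then show ?thesis using assms by (simp add: mat_mult_def mat_id_def)
  qed
qed

lemma irr_props:
  assumes "irreducible_mrep G H (d, \<rho>)"
  shows "0 < d" "\<And>h i k. h \<in> H \<Longrightarrow> d \<le> i \<or> d \<le> k \<Longrightarrow> \<rho> h i k = 0"
    "\<rho> \<one>\<^bsub>G\<^esub> = mat_id d"
    "\<And>h1 h2. h1 \<in> H \<Longrightarrow> h2 \<in> H \<Longrightarrow> \<rho> (h1 \<otimes>\<^bsub>G\<^esub> h2) = mat_mult d (\<rho> h1) (\<rho> h2)"
    "\<And>W. W \<subseteq> cvec d \<Longrightarrow> (\<lambda>_. 0) \<in> W \<Longrightarrow>
          (\<forall>v\<in>W. \<forall>w\<in>W. (\<lambda>i. v i + w i) \<in> W) \<Longrightarrow>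
          (\<forall>c. \<forall>v\<in>W. (\<lambda>i. c * v i) \<in> W) \<Longrightarrow>
          (\<forall>h\<in>H. \<forall>v\<in>W. mat_vec d (\<rho> h) v \<in> W)
        \<Longrightarrow> W = {\<lambda>_. 0} \<or> W = cvec d"
  using assms unfolding irreducible_mrep_def is_mrep_def Let_def by auto

lemma ker_zero:
  assumes irr: "irreducible_mrep G H (d, \<rho>)"
    and van: "\<forall>i k. e \<le> i \<or> d \<le> k \<longrightarrow> M i k = 0"
    and int: "\<forall>h\<in>H. mat_mult e (\<sigma> h) M = mat_mult d M (\<rho> h)"
    and v: "v \<in> cvec d" "v \<noteq> (\<lambda>_. 0)" "mat_vec d M v = (\<lambda>_. 0)"
  shows "M i k = 0"
proof -
  define W where "W = {w \<in> cvec d. mat_vec d M w = (\<lambda>_. 0)}"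
  have "W = {\<lambda>_. 0} \<or> W = cvec d"
  proof (rule irr_props(5)[OF irr])
    show "W \<subseteq> cvec d" by (auto simp: W_def)
    show "(\<lambda>_. 0) \<in> W" by (auto simp: W_def cvec_def mat_vec_zero)
    show "\<forall>v\<in>W. \<forall>w\<in>W. (\<lambda>i. v i + w i) \<in> W" by (auto simp: W_def cvec_def mat_vec_add)
    show "\<forall>c. \<forall>v\<in>W. (\<lambda>i. c * v i) \<in> W" by (auto simp: W_def cvec_def mat_vec_scale)
    show "\<forall>h\<in>H. \<forall>v\<in>W. mat_vec d (\<rho> h) v \<in> W"
    proof (intro ballI)
      fix h w assume h: "h \<in> H" and w: "w \<in> W"
      have c: "mat_vec d (\<rho> h) w \<in> cvec d"
        by (rule mat_vec_cvec) (use irr_props(2)[OF irr h] in auto)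
      have "mat_vec d M (mat_vec d (\<rho> h) w) = mat_vec d (mat_mult d M (\<rho> h)) w"
        by (rule mat_vec_assoc)
      also have "\<dots> = mat_vec d (mat_mult e (\<sigma> h) M) w" using int h by simp
      also have "\<dots> = mat_vec e (\<sigma> h) (mat_vec d M w)" by (rule mat_vec_assoc[symmetric])
      also have "\<dots> = (\<lambda>_. 0)" using w by (simp add: W_def mat_vec_zero)
      finally show "mat_vec d (\<rho> h) w \<in> W" using c by (simp add: W_def)
    qed
  qed
  moreover have "v \<in> W" using v by (simp add: W_def)
  ultimately have W: "W = cvec d" using v(2) by auto
  show ?thesis
  proof (cases "k < d")
    case True
    then have "uv k \<in> W" using W uv_cvec by auto
    then have "mat_vec d M (uv k) i = 0" by (simp add: W_def)
    then show ?thesis using mat_vec_uv[OF True] by simp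
  next
    case False then show ?thesis using van by simp
  qed
qed

lemma ker_trivial:
  assumes irr: "irreducible_mrep G H (d, \<rho>)"
    and van: "\<forall>i k. e \<le> i \<or> d \<le> k \<longrightarrow> M i k = 0"
    and int: "\<forall>h\<in>H. mat_mult e (\<sigma> h) M = mat_mult d M (\<rho> h)"
    and nz: "M i0 k0 \<noteq> 0"
    and v: "v \<in> cvec d" "mat_vec d M v = (\<lambda>_. 0)"
  shows "v = (\<lambda>_. 0)"
  using ker_zero[OF irr van int v(1) _ v(2), of i0 k0] nz by blast

lemma schur_neq:
  assumes irr1: "irreducible_mrep G H (e, \<sigma>)" and irr: "irreducible_mrep G H (d, \<rho>)"
    and van: "\<forall>i k. e \<le> i \<or> d \<le> k \<longrightarrow> M i k = 0"
    and int: "\<forall>h\<in>H. mat_mult e (\<sigma> h) M = mat_mult d M (\<rho> h)"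
    and nz: "M i0 k0 \<noteq> 0"
  shows "equiv_mrep H (d, \<rho>) (e, \<sigma>)"
proof -
  note kt = ker_trivial[OF irr van int nz]
  have d0: "0 < d" using irr_props(1)[OF irr] .
  define W where "W = {mat_vec d M v | v. v \<in> cvec d}"
  have van_e: "\<forall>i k. e \<le> i \<longrightarrow> M i k = 0" using van by auto
  have "W = {\<lambda>_. 0} \<or> W = cvec e"
  proof (rule irr_props(5)[OF irr1])
    show "W \<subseteq> cvec e" using mat_vec_cvec[OF van_e] by (auto simp: W_def)
    show "(\<lambda>_. 0) \<in> W" unfolding W_def
      by (rule CollectI, rule exI[of _ "\<lambda>_. 0"]) (auto simp: cvec_def mat_vec_zero)
    show "\<forall>v\<in>W. \<forall>w\<in>W. (\<lambda>i. v i + w i) \<in> W"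
    proof (intro ballI)
      fix a b assume "a \<in> W" "b \<in> W"
      then obtain v w where "v \<in> cvec d" "w \<in> cvec d" "a = mat_vec d M v" "b = mat_vec d M w"
        by (auto simp: W_def)
      then show "(\<lambda>i. a i + b i) \<in> W" unfolding W_def
        by (intro CollectI exI[of _ "\<lambda>i. v i + w i"]) (auto simp: cvec_def mat_vec_add)
    qed
    show "\<forall>c. \<forall>v\<in>W. (\<lambda>i. c * v i) \<in> W"
    proof (intro allI ballI)
      fix c a assume "a \<in> W"
      then obtain v where "v \<in> cvec d" "a = mat_vec d M v" by (auto simp: W_def)
      then show "(\<lambda>i. c * a i) \<in> W" unfolding W_def
        by (intro CollectI exI[of _ "\<lambda>i. c * v i"]) (auto simp: cvec_def mat_vec_scale)
    qed
    show "\<forall>h\<in>H. \<forall>v\<in>W. mat_vec e (\<sigma> h) v \<in> W"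
    proof (intro ballI)
      fix h a assume h: "h \<in> H" and "a \<in> W"
      then obtain v where v: "v \<in> cvec d" "a = mat_vec d M v" by (auto simp: W_def)
      have c: "mat_vec d (\<rho> h) v \<in> cvec d"
        by (rule mat_vec_cvec) (use irr_props(2)[OF irr h] in auto)
      have "mat_vec e (\<sigma> h) a = mat_vec d (mat_mult e (\<sigma> h) M) v" using v mat_vec_assoc by simp
      also have "\<dots> = mat_vec d (mat_mult d M (\<rho> h)) v" using int h by simp
      also have "\<dots> = mat_vec d M (mat_vec d (\<rho> h) v)" by (rule mat_vec_assoc[symmetric])
      finally show "mat_vec e (\<sigma> h) a \<in> W" using c unfolding W_def by blast
    qed
  qed
  moreover have "W \<noteq> {\<lambda>_. 0}"
  proof
    assume "W = {\<lambda>_. 0}"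
    then have "mat_vec d M (uv 0) = (\<lambda>_. 0)" using uv_cvec[OF d0] unfolding W_def by blast
    then have "uv 0 = (\<lambda>_. 0)" using kt uv_cvec[OF d0] by blast
    then show False by (metis uv_def zero_neq_one)
  qed
  ultimately have W: "W = cvec e" by simp
  have "\<forall>k. \<exists>w. k < e \<longrightarrow> w \<in> cvec d \<and> mat_vec d M w = uv k"
  proof (intro allI)
    fix k show "\<exists>w. k < e \<longrightarrow> w \<in> cvec d \<and> mat_vec d M w = uv k"
    proof (cases "k < e")
      case True
      then have "uv k \<in> W" using W uv_cvec by auto
      then show ?thesis unfolding W_def by auto
    qed auto
  qed
  then obtain pre where pre: "\<And>k. k < e \<Longrightarrow> pre k \<in> cvec d \<and> mat_vec d M (pre k) = uv k"
    by metis
  define Q where "Q = (\<lambda>l k. if k < e then pre k l else 0)"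
  have Qvan: "\<forall>l k. d \<le> l \<or> e \<le> k \<longrightarrow> Q l k = 0"
    using pre by (auto simp: Q_def cvec_def)
  have MQ: "mat_mult d M Q = mat_id e"
  proof (intro ext)
    fix i k show "mat_mult d M Q i k = mat_id e i k"
    proof (cases "k < e")
      case True
      have "mat_mult d M Q i k = mat_vec d M (pre k) i" by (simp add: mat_mult_def mat_vec_def Q_def True)
      also have "\<dots> = uv k i" using pre[OF True] by simp
      finally show ?thesis using True van by (auto simp: uv_def mat_id_def)
    next
      case False then show ?thesis by (simp add: mat_mult_def Q_def mat_id_def)
    qed
  qed
  have QM: "mat_mult e Q M = mat_id d"
  proof (intro ext)
    fix l k show "mat_mult e Q M l k = mat_id d l k"
    proof (cases "k < d")
      case True
      define x where "x = (\<lambda>l. mat_mult e Q M l k)"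
      have x: "x = mat_vec e Q (mat_vec d M (uv k))"
        unfolding x_def mat_vec_uv[OF True] by (simp add: mat_mult_def mat_vec_def)
      have xc: "x \<in> cvec d" unfolding x by (rule mat_vec_cvec) (use Qvan in auto)
      have Muk: "mat_vec d M (uv k) \<in> cvec e" by (rule mat_vec_cvec[OF van_e])
      have "mat_vec d M x = mat_vec e (mat_mult d M Q) (mat_vec d M (uv k))"
        unfolding x by (rule mat_vec_assoc)
      also have "\<dots> = mat_vec d M (uv k)" unfolding MQ by (rule mat_vec_id[OF Muk])
      finally have "mat_vec d M (\<lambda>i. x i - uv k i) = (\<lambda>_. 0)" by (simp add: mat_vec_diff)
      moreover have "(\<lambda>i. x i - uv k i) \<in> cvec d" using xc uv_cvec[OF True] by (auto simp: cvec_def)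
      ultimately have "(\<lambda>i. x i - uv k i) = (\<lambda>_. 0)" using kt by blast
      then have "x l = uv k l" by (metis eq_iff_diff_eq_0)
      then show ?thesis using True by (simp add: x_def uv_def mat_id_def)
    next
      case False then show ?thesis using van by (simp add: mat_mult_def mat_id_def)
    qed
  qed
  have "card {..<e} = card {..<d}"
  proof (rule rank_eq[where A=M and Bm=Q])
    fix i i' assume "i \<in> {..<e}" "i' \<in> {..<e}"
    show "(\<Sum>k\<in>{..<d}. M i k * Q k i') = (if i = i' then 1 else 0)"
      using fun_cong[OF fun_cong[OF MQ, of i], of i'] \<open>i \<in> {..<e}\<close>
      by (auto simp: mat_mult_def mat_id_def)
  next
    fix k k' assume "k \<in> {..<d}" "k' \<in> {..<d}"
    show "(\<Sum>i\<in>{..<e}. Q k i * M i k') = (if k = k' then 1 else 0)"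
      using fun_cong[OF fun_cong[OF QM, of k], of k'] \<open>k \<in> {..<d}\<close>
      by (auto simp: mat_mult_def mat_id_def)
  qed auto
  then have ed: "e = d" by simp
  have "\<exists>P Q. mat_mult d P Q = mat_id d \<and> mat_mult d Q P = mat_id d \<and>
        (\<forall>h\<in>H. mat_mult d P (\<rho> h) = mat_mult d (\<sigma> h) P)"
    apply (rule exI[of _ M])
    apply (rule exI[of _ Q])
    using MQ QM int ed by simp
  then show ?thesis unfolding equiv_mrep_def using ed by simp
qed

lemma eigen_ex:
  fixes M :: "nat \<Rightarrow> nat \<Rightarrow> complex"
  assumes d: "0 < d"
  shows "\<exists>c v. v \<in> cvec d \<and> v \<noteq> (\<lambda>_. 0) \<and> (\<forall>i<d. mat_vec d M v i = c * v i)"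
proof -
  define A where "A = mat d d (\<lambda>(i, k). M i k)"
  have A: "A \<in> carrier_mat d d" by (simp add: A_def)
  from spectrum_non_empty[OF A d] obtain c where "c \<in> spectrum A" by auto
  then have "eigenvalue A c" by (simp add: spectrum_def)
  then obtain w where w: "w \<in> carrier_vec d" "w \<noteq> 0\<^sub>v d" "A *\<^sub>v w = c \<cdot>\<^sub>v w"
    unfolding eigenvalue_def eigenvector_def using A by auto
  define v where "v = (\<lambda>i. if i < d then w $ i else 0)"
  have "v \<in> cvec d" by (simp add: v_def cvec_def)
  moreover have "v \<noteq> (\<lambda>_. 0)"
  proof
    assume "v = (\<lambda>_. 0)"
    then have "w = 0\<^sub>v d" using w(1) by (intro eq_vecI) (auto simp: v_def fun_eq_iff, metis)
    with w(2) show False by simp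
  qed
  moreover have "\<forall>i<d. mat_vec d M v i = c * v i"
  proof (intro allI impI)
    fix i assume i: "i < d"
    have "(A *\<^sub>v w) $ i = (\<Sum>l<d. M i l * w $ l)"
      using i w(1) by (simp add: A_def scalar_prod_def atLeast0LessThan)
    also have "\<dots> = mat_vec d M v i" by (simp add: mat_vec_def v_def)
    finally show "mat_vec d M v i = c * v i" using w(3) i w(1) by (simp add: v_def)
  qed
  ultimately show ?thesis by blast
qed

lemma schur_eq:
  assumes irr: "irreducible_mrep G H (d, \<rho>)"
    and van: "\<forall>i k. d \<le> i \<or> d \<le> k \<longrightarrow> M i k = 0"
    and int: "\<forall>h\<in>H. mat_mult d (\<rho> h) M = mat_mult d M (\<rho> h)"
  shows "\<exists>c. \<forall>i k. M i k = c * mat_id d i k"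
proof -
  obtain c v where v: "v \<in> cvec d" "v \<noteq> (\<lambda>_. 0)" "\<forall>i<d. mat_vec d M v i = c * v i"
    using eigen_ex[OF irr_props(1)[OF irr]] by blast
  define N where "N = (\<lambda>i k. M i k - c * mat_id d i k)"
  have vanN: "\<forall>i k. d \<le> i \<or> d \<le> k \<longrightarrow> N i k = 0" using van by (auto simp: N_def mat_id_def)
  have intN: "\<forall>h\<in>H. mat_mult d (\<rho> h) N = mat_mult d N (\<rho> h)"
  proof
    fix h assume h: "h \<in> H"
    have r1: "mat_mult d (\<rho> h) (mat_id d) = \<rho> h"
      by (rule mat_mult_id_right) (use irr_props(2)[OF irr h] in auto)
    have r2: "mat_mult d (mat_id d) (\<rho> h) = \<rho> h"
      by (rule mat_mult_id_left) (use irr_props(2)[OF irr h] in auto)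
    have "mat_mult d (\<rho> h) N = (\<lambda>i k. mat_mult d (\<rho> h) M i k - c * mat_mult d (\<rho> h) (mat_id d) i k)"
      by (simp add: N_def mat_mult_def algebra_simps sum_subtractf sum_distrib_left)
    also have "\<dots> = (\<lambda>i k. mat_mult d M (\<rho> h) i k - c * mat_mult d (mat_id d) (\<rho> h) i k)"
      using int h r1 r2 by simp
    also have "\<dots> = mat_mult d N (\<rho> h)"
      by (simp add: N_def mat_mult_def algebra_simps sum_subtractf sum_distrib_left)
    finally show "mat_mult d (\<rho> h) N = mat_mult d N (\<rho> h)" .
  qed
  have "mat_vec d N v = (\<lambda>_. 0)"
  proof
    fix i
    have "mat_vec d N v i = mat_vec d M v i - c * mat_vec d (mat_id d) v i"
      by (simp add: N_def mat_vec_def algebra_simps sum_subtractf sum_distrib_left)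
    also have "\<dots> = mat_vec d M v i - c * v i" using mat_vec_id[OF v(1)] by simp
    also have "\<dots> = 0"
    proof (cases "i < d")
      case True then show ?thesis using v(3) by simp
    next
      case False then show ?thesis using van v(1) by (simp add: mat_vec_def cvec_def)
    qed
    finally show "mat_vec d N v i = 0" .
  qed
  then have "\<And>i k. N i k = 0" using ker_zero[OF irr vanN intN v(1,2)] by blast
  then show ?thesis by (auto simp: N_def intro!: exI[of _ c])
qed




lemma fun_act_sum:
  "fun_act G X \<phi> h (\<lambda>x. \<Sum>p\<in>A. a p * f p x) = (\<lambda>x. \<Sum>p\<in>A. a p * fun_act G X \<phi> h (f p) x)"
  by (auto simp: fun_act_def)

lemma fun_act_lin_comb:
  "fun_act G X \<phi> h (lin_comb B c) = (\<lambda>x. \<Sum>i<length B. c i * fun_act G X \<phi> h (B ! i) x)"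
  unfolding lin_comb_def by (rule fun_act_sum)

definition family :: "('g, 'm) monoid_scheme \<Rightarrow> 'x set \<Rightarrow> ('g \<Rightarrow> 'x \<Rightarrow> 'x) \<Rightarrow> 'g set
   \<Rightarrow> nat \<Rightarrow> ('g \<Rightarrow> nat \<Rightarrow> nat \<Rightarrow> complex) \<Rightarrow> (nat \<Rightarrow> 'x \<Rightarrow> complex) \<Rightarrow> bool" where
  "family G X \<phi> H d \<rho> v \<longleftrightarrow> (\<forall>h\<in>H. \<forall>q<d. fun_act G X \<phi> h (v q) = (\<lambda>x. \<Sum>p<d. \<rho> h p q * v p x))"

lemma complete_irrepsD:
  assumes "complete_irreps G H R"
  shows "\<And>r. r \<in> R \<Longrightarrow> irreducible_mrep G H r"
    "\<And>r s. r \<in> R \<Longrightarrow> s \<in> R \<Longrightarrow> equiv_mrep H r s \<Longrightarrow> r = s"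
  using assms unfolding complete_irreps_def by auto

lemma ssl:
  assumes R: "complete_irreps G H R"
    and B: "is_basis Y B" and ad: "adapted_blocks G X \<phi> H B bs" and bsR: "set bs \<subseteq> R"
    and r: "(d, \<rho>) \<in> R"
    and vY: "\<And>q. q < d \<Longrightarrow> v q \<in> CV Y"
    and fam: "family G X \<phi> H d \<rho> v"
    and q: "q < d" and nz: "coord B (v q) i \<noteq> 0"
  shows "i < length B \<and> bs ! bk (map fst bs) i = (d, \<rho>) \<and> ps (map fst bs) i = q"
proof -
  define ds where "ds = map fst bs"
  define N where "N = length B"
  have N: "N = sum_list ds" using ad by (simp add: adapted_blocks_def N_def ds_def)
  define c where "c p = coord B (v p)" for p
  have cv: "v p = lin_comb B (c p)" "\<And>i. N \<le> i \<Longrightarrow> c p i = 0" if "p < d" for p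
    using coord_ex[OF B vY[OF that]] by (auto simp: c_def N_def)
  have iN: "i < N"
  proof (rule ccontr)
    assume "\<not> i < N" then show False using cv(2)[OF q, of i] nz by (simp add: c_def)
  qed
  have irrR: "irreducible_mrep G H (d, \<rho>)" using complete_irrepsD(1)[OF R r] .
  have EQ: "(\<Sum>k<N. bdiag bs h i k * c q k) = (\<Sum>p<d. \<rho> h p q * c p i)"
    if h: "h \<in> H" and q: "q < d" and i: "i < N" for h q i
  proof -
    have adh: "\<And>k. k < N \<Longrightarrow> fun_act G X \<phi> h (B ! k) = lin_comb B (\<lambda>i. bdiag bs h i k)"
      using ad h by (auto simp: adapted_blocks_def N_def)
    have "fun_act G X \<phi> h (v q) = lin_comb B (\<lambda>i. \<Sum>k<N. bdiag bs h i k * c q k)"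
    proof
      fix x
      have "fun_act G X \<phi> h (v q) x = (\<Sum>k<N. c q k * fun_act G X \<phi> h (B ! k) x)"
        by (subst cv(1)[OF q]) (simp add: fun_act_lin_comb N_def)
      also have "\<dots> = (\<Sum>k<N. c q k * (\<Sum>i<N. bdiag bs h i k * (B ! i) x))"
        by (rule sum.cong) (auto simp: adh lin_comb_def N_def)
      also have "\<dots> = (\<Sum>k<N. \<Sum>i<N. c q k * (bdiag bs h i k * (B ! i) x))"
        by (simp add: sum_distrib_left)
      also have "\<dots> = (\<Sum>i<N. \<Sum>k<N. c q k * (bdiag bs h i k * (B ! i) x))" by (rule sum.swap)
      also have "\<dots> = lin_comb B (\<lambda>i. \<Sum>k<N. bdiag bs h i k * c q k) x"
        unfolding lin_comb_def sum_distrib_right N_def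
        by (auto intro!: sum.cong simp: mult.commute mult.left_commute)
      finally show "fun_act G X \<phi> h (v q) x = lin_comb B (\<lambda>i. \<Sum>k<N. bdiag bs h i k * c q k) x" .
    qed
    moreover have "fun_act G X \<phi> h (v q) = lin_comb B (\<lambda>i. \<Sum>p<d. \<rho> h p q * c p i)"
    proof
      fix x
      have "fun_act G X \<phi> h (v q) x = (\<Sum>p<d. \<rho> h p q * v p x)"
        using fam h q unfolding family_def by auto
      also have "\<dots> = (\<Sum>p<d. \<rho> h p q * (\<Sum>i<N. c p i * (B ! i) x))"
        by (rule sum.cong) (auto simp: cv(1) lin_comb_def N_def)
      also have "\<dots> = (\<Sum>p<d. \<Sum>i<N. \<rho> h p q * (c p i * (B ! i) x))"
        by (simp add: sum_distrib_left)
      also have "\<dots> = (\<Sum>i<N. \<Sum>p<d. \<rho> h p q * (c p i * (B ! i) x))" by (rule sum.swap)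
      also have "\<dots> = lin_comb B (\<lambda>i. \<Sum>p<d. \<rho> h p q * c p i) x"
        unfolding lin_comb_def sum_distrib_right N_def
        by (auto intro!: sum.cong simp: mult.commute mult.left_commute)
      finally show "fun_act G X \<phi> h (v q) x = lin_comb B (\<lambda>i. \<Sum>p<d. \<rho> h p q * c p i) x" .
    qed
    ultimately have "lin_comb B (\<lambda>i. \<Sum>k<N. bdiag bs h i k * c q k) = lin_comb B (\<lambda>i. \<Sum>p<d. \<rho> h p q * c p i)"
      by simp
    from basis_coeff_eq[OF B this] i show ?thesis by (simp add: N_def)
  qed
  define a where "a = bk ds i"
  have bpi: "a < length ds" "ps ds i < ds ! a" "off ds a + ps ds i = i"
    using bk_ps_props[of i ds] iN N by (auto simp: a_def)
  obtain e \<sigma> where es: "bs ! a = (e, \<sigma>)" by (cases "bs ! a")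
  have eds: "ds ! a = e" using bpi(1) es by (simp add: ds_def)
  have esR: "(e, \<sigma>) \<in> R" using bsR bpi(1) es by (metis ds_def length_map nth_mem subsetD)
  have irrS: "irreducible_mrep G H (e, \<sigma>)" using complete_irrepsD(1)[OF R esR] .
  define M where "M i' q' = (if i' < e \<and> q' < d then c q' (off ds a + i') else 0)" for i' q'
  have van: "\<forall>i' q'. e \<le> i' \<or> d \<le> q' \<longrightarrow> M i' q' = 0" by (auto simp: M_def)
  have int: "\<forall>h\<in>H. mat_mult e (\<sigma> h) M = mat_mult d M (\<rho> h)"
  proof (intro ballI ext)
    fix h i' q' assume h: "h \<in> H"
    show "mat_mult e (\<sigma> h) M i' q' = mat_mult d M (\<rho> h) i' q'"
    proof (cases "i' < e \<and> q' < d")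
      case True
      have idx: "off ds a + i' < N" using off_lt[OF bpi(1)] True eds N by simp
      have bk1: "bk ds (off ds a + i') = a" "ps ds (off ds a + i') = i'"
        using bk_ps_off[OF bpi(1)] True eds by auto
      have "(\<Sum>k<N. bdiag bs h (off ds a + i') k * c q' k)
          = (\<Sum>l<ds ! a. bdiag bs h (off ds a + i') (off ds a + l) * c q' (off ds a + l))"
        unfolding N
      proof (rule sum_seg_only[OF bpi(1)])
        fix k assume k: "k < sum_list ds" "bk ds k \<noteq> a"
        show "bdiag bs h (off ds a + i') k * c q' k = 0"
          using bdiag_bk[of "off ds a + i'" bs k h] idx k bk1 N by (simp add: ds_def)
      qed
      also have "\<dots> = (\<Sum>l<e. \<sigma> h i' l * M l q')"
      proof (rule sum.cong)
        fix l assume l: "l \<in> {..<e}"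
        have "off ds a + l < N" using off_lt[OF bpi(1)] l eds N by simp
        moreover have "bk ds (off ds a + l) = a" "ps ds (off ds a + l) = l"
          using bk_ps_off[OF bpi(1)] l eds by auto
        ultimately show "bdiag bs h (off ds a + i') (off ds a + l) * c q' (off ds a + l) = \<sigma> h i' l * M l q'"
          using bdiag_bk[of "off ds a + i'" bs "off ds a + l" h] idx bk1 es l True N
          by (simp add: ds_def M_def)
      qed (simp add: eds)
      finally have "mat_mult e (\<sigma> h) M i' q' = (\<Sum>p<d. \<rho> h p q' * c p (off ds a + i'))"
        using EQ[OF h _ idx, of q'] True by (simp add: mat_mult_def)
      also have "\<dots> = mat_mult d M (\<rho> h) i' q'"
        using True by (auto simp: mat_mult_def M_def mult.commute intro!: sum.cong)
      finally show ?thesis .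
    next
      case False
      then consider "\<not> i' < e" | "\<not> q' < d" by blast
      then show ?thesis
      proof cases
        assume "\<not> i' < e"
        then show ?thesis using irr_props(2)[OF irrS h] by (simp add: mat_mult_def M_def)
      next
        assume "\<not> q' < d"
        then show ?thesis using irr_props(2)[OF irrR h] by (simp add: mat_mult_def M_def)
      qed
    qed
  qed
  have Mnz: "M (ps ds i) q \<noteq> 0"
    using nz bpi eds q by (simp add: M_def c_def)
  have same: "(e, \<sigma>) = (d, \<rho>)"
  proof (rule ccontr)
    assume ne: "(e, \<sigma>) \<noteq> (d, \<rho>)"
    have "equiv_mrep H (d, \<rho>) (e, \<sigma>)" by (rule schur_neq[OF irrS irrR van int Mnz])
    then show False using complete_irrepsD(2)[OF R r esR] ne by auto
  qed
  then have ed: "e = d" "\<sigma> = \<rho>" by auto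
  obtain cc where cc: "\<forall>i k. M i k = cc * mat_id d i k"
    using schur_eq[OF irrR, of M] van int ed by auto
  have "ps ds i = q" using cc Mnz by (auto simp: mat_id_def split: if_splits)
  then show ?thesis using iN same es by (simp add: a_def ds_def N_def)
qed




lemma block_family:
  assumes ad: "adapted_blocks G X \<phi> H B bs" and a: "a < length bs" and ba: "bs ! a = (d, \<rho>)"
  shows "family G X \<phi> H d \<rho> (\<lambda>q. B ! (off (map fst bs) a + q))"
  unfolding family_def
proof (intro ballI allI impI ext)
  fix h q x assume h: "h \<in> H" and q: "q < d"
  define ds where "ds = map fst bs"
  have N: "length B = sum_list ds" using ad by (simp add: adapted_blocks_def ds_def)
  have a': "a < length ds" "ds ! a = d" using a ba by (auto simp: ds_def)
  have idx: "off ds a + q < length B" using off_lt[OF a'(1)] q a' N by simp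
  have bk1: "bk ds (off ds a + q) = a" "ps ds (off ds a + q) = q"
    using bk_ps_off[OF a'(1)] q a' by auto
  have "fun_act G X \<phi> h (B ! (off ds a + q)) x = lin_comb B (\<lambda>i. bdiag bs h i (off ds a + q)) x"
    using ad h idx by (simp add: adapted_blocks_def)
  also have "\<dots> = (\<Sum>i<sum_list ds. bdiag bs h i (off ds a + q) * (B ! i) x)"
    by (simp add: lin_comb_def N)
  also have "\<dots> = (\<Sum>p<ds ! a. bdiag bs h (off ds a + p) (off ds a + q) * (B ! (off ds a + p)) x)"
  proof (rule sum_seg_only[OF a'(1)])
    fix i assume i: "i < sum_list ds" "bk ds i \<noteq> a"
    show "bdiag bs h i (off ds a + q) * (B ! i) x = 0"
      using bdiag_bk[of i bs "off ds a + q" h] i idx bk1 N by (simp add: ds_def)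
  qed
  also have "\<dots> = (\<Sum>p<d. \<rho> h p q * (B ! (off ds a + p)) x)"
  proof (rule sum.cong)
    fix p assume p: "p \<in> {..<d}"
    have "off ds a + p < length B" using off_lt[OF a'(1)] p a' N by simp
    moreover have "bk ds (off ds a + p) = a" "ps ds (off ds a + p) = p"
      using bk_ps_off[OF a'(1)] p a' by auto
    ultimately show "bdiag bs h (off ds a + p) (off ds a + q) * (B ! (off ds a + p)) x = \<rho> h p q * (B ! (off ds a + p)) x"
      using bdiag_bk[of "off ds a + p" bs "off ds a + q" h] idx bk1 ba N by (simp add: ds_def)
  qed (simp add: a')
  finally show "fun_act G X \<phi> h (B ! (off (map fst bs) a + q)) x = (\<Sum>p<d. \<rho> h p q * (B ! (off (map fst bs) a + p)) x)"
    by (simp add: ds_def)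
qed

definition restr :: "'x set \<Rightarrow> ('x \<Rightarrow> complex) \<Rightarrow> 'x \<Rightarrow> complex" where
  "restr Y f = (\<lambda>x. if x \<in> Y then f x else 0)"

definition hstable :: "('g, 'm) monoid_scheme \<Rightarrow> 'x set \<Rightarrow> ('g \<Rightarrow> 'x \<Rightarrow> 'x) \<Rightarrow> 'g set \<Rightarrow> 'x set \<Rightarrow> bool" where
  "hstable G X \<phi> H Y \<longleftrightarrow> Y \<subseteq> X \<and> (\<forall>h\<in>H. \<forall>y\<in>Y. \<phi> h y \<in> Y)"

lemma act_inv_cancel:
  assumes act: "group_action G X \<phi>" and g: "g \<in> carrier G" and x: "x \<in> X"
  shows "\<phi> g (\<phi> (inv\<^bsub>G\<^esub> g) x) = x"
proof -
  interpret group_action G X \<phi> by (rule act)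
  interpret group G using group_hom group_hom.axioms(1) by auto
  have "\<phi> g (\<phi> (inv\<^bsub>G\<^esub> g) x) = \<phi> (g \<otimes>\<^bsub>G\<^esub> inv\<^bsub>G\<^esub> g) x" using composition_rule[OF x g inv_closed[OF g]] by simp
  also have "\<dots> = \<phi> \<one>\<^bsub>G\<^esub> x" using g by simp
  also have "\<dots> = x" by (simp add: id_eq_one[symmetric] x)
  finally show ?thesis .
qed

lemma restr_fun_act:
  assumes act: "group_action G X \<phi>" and sub: "subgroup H G" and st: "hstable G X \<phi> H Y" and h: "h \<in> H"
  shows "fun_act G X \<phi> h (restr Y f) = restr Y (fun_act G X \<phi> h f)"
proof
  fix x
  have ih: "inv\<^bsub>G\<^esub> h \<in> H" by (rule subgroup.m_inv_closed[OF sub h])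
  have hc: "h \<in> carrier G" by (rule subgroup.mem_carrier[OF sub h])
  show "fun_act G X \<phi> h (restr Y f) x = restr Y (fun_act G X \<phi> h f) x"
  proof (cases "x \<in> X")
    case True
    have "x \<in> Y \<longleftrightarrow> \<phi> (inv\<^bsub>G\<^esub> h) x \<in> Y"
    proof
      assume "x \<in> Y" then show "\<phi> (inv\<^bsub>G\<^esub> h) x \<in> Y" using st ih by (auto simp: hstable_def)
    next
      assume "\<phi> (inv\<^bsub>G\<^esub> h) x \<in> Y"
      then have "\<phi> h (\<phi> (inv\<^bsub>G\<^esub> h) x) \<in> Y" using st h by (auto simp: hstable_def)
      then show "x \<in> Y" using act_inv_cancel[OF act hc True] by simp
    qed
    then show ?thesis using True st by (auto simp: fun_act_def restr_def hstable_def)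
  next
    case False
    then show ?thesis using st by (auto simp: fun_act_def restr_def hstable_def)
  qed
qed

lemma family_restr:
  assumes act: "group_action G X \<phi>" and sub: "subgroup H G" and st: "hstable G X \<phi> H Y"
    and fam: "family G X \<phi> H d \<rho> v"
  shows "family G X \<phi> H d \<rho> (\<lambda>q. restr Y (v q))"
  unfolding family_def
proof (intro ballI allI impI)
  fix h q assume h: "h \<in> H" and q: "q < d"
  have "fun_act G X \<phi> h (restr Y (v q)) = restr Y (fun_act G X \<phi> h (v q))"
    by (rule restr_fun_act[OF act sub st h])
  also have "\<dots> = restr Y (\<lambda>x. \<Sum>p<d. \<rho> h p q * v p x)" using fam h q by (simp add: family_def)
  also have "\<dots> = (\<lambda>x. \<Sum>p<d. \<rho> h p q * restr Y (v p) x)" by (auto simp: restr_def)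
  finally show "fun_act G X \<phi> h (restr Y (v q)) = (\<lambda>x. \<Sum>p<d. \<rho> h p q * restr Y (v p) x)" .
qed

lemma supp_restr:
  assumes act: "group_action G X \<phi>" and sub: "subgroup H G" and st: "hstable G X \<phi> H Y"
    and R: "complete_irreps G H R"
    and B: "is_basis Y B" and ad: "adapted_blocks G X \<phi> H B bs" and bsR: "set bs \<subseteq> R"
    and ad': "adapted_blocks G X \<phi> H B' bs'" and bsR': "set bs' \<subseteq> R"
    and k: "k < length B'"
    and nz: "coord B (restr Y (B' ! k)) i \<noteq> 0"
  shows "i < length B \<and> bs ! bk (map fst bs) i = bs' ! bk (map fst bs') k
         \<and> ps (map fst bs) i = ps (map fst bs') k"
proof -
  define ds' where "ds' = map fst bs'"
  have N': "length B' = sum_list ds'" using ad' by (simp add: adapted_blocks_def ds'_def)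
  define a where "a = bk ds' k"
  have bpi: "a < length ds'" "ps ds' k < ds' ! a" "off ds' a + ps ds' k = k"
    using bk_ps_props[of k ds'] k N' by (auto simp: a_def)
  obtain d \<rho> where ba: "bs' ! a = (d, \<rho>)" by (cases "bs' ! a")
  have dd: "ds' ! a = d" using bpi(1) ba by (simp add: ds'_def)
  have r: "(d, \<rho>) \<in> R" using bsR' bpi(1) ba by (metis ds'_def length_map nth_mem subsetD)
  have a: "a < length bs'" using bpi(1) by (simp add: ds'_def)
  have fam: "family G X \<phi> H d \<rho> (\<lambda>q. restr Y (B' ! (off ds' a + q)))"
    using family_restr[OF act sub st block_family[OF ad' a ba]] by (simp add: ds'_def)
  have "i < length B \<and> bs ! bk (map fst bs) i = (d, \<rho>) \<and> ps (map fst bs) i = ps ds' k"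
  proof (rule ssl[OF R B ad bsR r, where v="\<lambda>q. restr Y (B' ! (off ds' a + q))"])
    show "\<And>q. q < d \<Longrightarrow> restr Y (B' ! (off ds' a + q)) \<in> CV Y" by (auto simp: CV_def restr_def)
    show "family G X \<phi> H d \<rho> (\<lambda>q. restr Y (B' ! (off ds' a + q)))" by (rule fam)
    show "ps ds' k < d" using bpi dd by simp
    show "coord B (restr Y (B' ! (off ds' a + ps ds' k))) i \<noteq> 0" using nz bpi by simp
  qed
  then show ?thesis using ba by (simp add: a_def ds'_def)
qed

lemma restr_CV: "f \<in> CV Y \<Longrightarrow> restr Y f = f"
  by (auto simp: CV_def restr_def)

lemma count_class:
  assumes ad: "adapted_blocks G X \<phi> H B bs" and pos: "0 < fst r"
  shows "card {i. i < length B \<and> bs ! bk (map fst bs) i = r \<and> ps (map fst bs) i = 0}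
       = length (filter (\<lambda>s. s = r) bs)"
proof -
  have N: "length B = sum_list (map fst bs)" using ad by (simp add: adapted_blocks_def)
  have "card {i. i < length B \<and> bs ! bk (map fst bs) i = r \<and> ps (map fst bs) i = 0}
      = card {a. a < length (map fst bs) \<and> bs ! a = r \<and> 0 < map fst bs ! a}"
    unfolding N by (rule card_pos_class)
  also have "\<dots> = card {a. a < length bs \<and> bs ! a = r}"
    using pos by (intro arg_cong[where f=card]) auto
  also have "\<dots> = length (filter (\<lambda>s. s = r) bs)" by (simp add: length_filter_conv_card)
  finally show ?thesis .
qed

lemma count_unique:
  assumes act: "group_action G X \<phi>" and sub: "subgroup H G" and st: "hstable G X \<phi> H Y"
    and R: "complete_irreps G H R"
    and B1: "is_basis Y B1" and ad1: "adapted_blocks G X \<phi> H B1 bs1" and R1: "set bs1 \<subseteq> R"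
    and B2: "is_basis Y B2" and ad2: "adapted_blocks G X \<phi> H B2 bs2" and R2: "set bs2 \<subseteq> R"
  shows "length (filter (\<lambda>s. s = r) bs1) = length (filter (\<lambda>s. s = r) bs2)"
proof (cases "r \<in> R")
  case False
  then have "filter (\<lambda>s. s = r) bs1 = []" "filter (\<lambda>s. s = r) bs2 = []"
    using R1 R2 by (auto simp: filter_empty_conv)
  then show ?thesis by simp
next
  case True
  obtain d \<rho> where r: "r = (d, \<rho>)" by (cases r)
  have pos: "0 < fst r" using irr_props(1)[OF complete_irrepsD(1)[OF R True[unfolded r]]] r by simp
  define I where "I = {i. i < length B1 \<and> bs1 ! bk (map fst bs1) i = r \<and> ps (map fst bs1) i = 0}"
  define J where "J = {i. i < length B2 \<and> bs2 ! bk (map fst bs2) i = r \<and> ps (map fst bs2) i = 0}"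
  have s12: "i < length B1 \<and> bs1 ! bk (map fst bs1) i = bs2 ! bk (map fst bs2) k \<and> ps (map fst bs1) i = ps (map fst bs2) k"
    if "k < length B2" "coord B1 (B2 ! k) i \<noteq> 0" for i k
    using supp_restr[OF act sub st R B1 ad1 R1 ad2 R2 that(1)] that restr_CV[OF basis_in_CV[OF B2 that(1)]] by simp
  have s21: "i < length B2 \<and> bs2 ! bk (map fst bs2) i = bs1 ! bk (map fst bs1) k \<and> ps (map fst bs2) i = ps (map fst bs1) k"
    if "k < length B1" "coord B2 (B1 ! k) i \<noteq> 0" for i k
    using supp_restr[OF act sub st R B2 ad2 R2 ad1 R1 that(1)] that restr_CV[OF basis_in_CV[OF B1 that(1)]] by simp
  have "card I = card J"
  proof (rule rank_eq[where A="\<lambda>i k. coord B1 (B2 ! k) i" and Bm="\<lambda>k i. coord B2 (B1 ! i) k"])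
    show "finite I" "finite J" by (auto simp: I_def J_def)
  next
    fix i i' assume i: "i \<in> I" and i': "i' \<in> I"
    have "(\<Sum>k<length B2. coord B1 (B2 ! k) i * coord B2 (B1 ! i') k) = (if i = i' then 1 else 0)"
      by (rule change_prod[OF B1 B2]) (use i i' in \<open>auto simp: I_def\<close>)
    moreover have "(\<Sum>k<length B2. coord B1 (B2 ! k) i * coord B2 (B1 ! i') k)
        = (\<Sum>k\<in>J. coord B1 (B2 ! k) i * coord B2 (B1 ! i') k)"
      by (rule sum.mono_neutral_right) (use s21 i' in \<open>auto simp: I_def J_def\<close>)
    ultimately show "(\<Sum>k\<in>J. coord B1 (B2 ! k) i * coord B2 (B1 ! i') k) = (if i = i' then 1 else 0)" by simp
  next
    fix k k' assume k: "k \<in> J" and k': "k' \<in> J"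
    have "(\<Sum>i<length B1. coord B2 (B1 ! i) k * coord B1 (B2 ! k') i) = (if k = k' then 1 else 0)"
      by (rule change_prod[OF B2 B1]) (use k k' in \<open>auto simp: J_def\<close>)
    moreover have "(\<Sum>i<length B1. coord B2 (B1 ! i) k * coord B1 (B2 ! k') i)
        = (\<Sum>i\<in>I. coord B2 (B1 ! i) k * coord B1 (B2 ! k') i)"
      by (rule sum.mono_neutral_right) (use s12 k' in \<open>auto simp: I_def J_def\<close>)
    ultimately show "(\<Sum>i\<in>I. coord B2 (B1 ! i) k * coord B1 (B2 ! k') i) = (if k = k' then 1 else 0)" by simp
  qed
  then show ?thesis using count_class[OF ad1 pos] count_class[OF ad2 pos] by (simp add: I_def J_def)
qed

lemma mult_eq:
  assumes act: "group_action G X \<phi>" and sub: "subgroup H G" and st: "hstable G X \<phi> H Y"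
    and R: "complete_irreps G H R"
    and B: "is_basis Y B" and ad: "adapted_blocks G X \<phi> H B bs" and bsR: "set bs \<subseteq> R"
  shows "Defs.mult G X \<phi> H R Y r = length (filter (\<lambda>s. s = r) bs)"
  unfolding Defs.mult_def
proof (rule the_equality)
  show "\<exists>B' bs'. is_basis Y B' \<and> set bs' \<subseteq> R \<and> adapted_blocks G X \<phi> H B' bs' \<and>
      length (filter (\<lambda>s. s = r) bs') = length (filter (\<lambda>s. s = r) bs)"
    using B ad bsR by blast
  fix \<kappa> assume "\<exists>B' bs'. is_basis Y B' \<and> set bs' \<subseteq> R \<and> adapted_blocks G X \<phi> H B' bs' \<and>
      length (filter (\<lambda>s. s = r) bs') = \<kappa>"
  then obtain B' bs' where "is_basis Y B'" "set bs' \<subseteq> R" "adapted_blocks G X \<phi> H B' bs'"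
      "length (filter (\<lambda>s. s = r) bs') = \<kappa>" by blast
  then show "\<kappa> = length (filter (\<lambda>s. s = r) bs)"
    using count_unique[OF act sub st R B ad bsR] by metis
qed




context group begin

lemma inv_prod_cancel: "g \<in> carrier G \<Longrightarrow> h \<in> carrier G \<Longrightarrow> inv (g \<otimes> h) \<otimes> g = inv h"
  by (simp add: inv_mult_group m_assoc)

lemma left_mult_bij:
  assumes sub: "subgroup H G" and g: "g \<in> H"
  shows "bij_betw (\<lambda>h. g \<otimes> h) H H"
proof -
  have gc: "g \<in> carrier G" using subgroup.mem_carrier[OF sub g] .
  show ?thesis unfolding bij_betw_def
  proof
    show "inj_on (\<lambda>h. g \<otimes> h) H"
      using gc subgroup.mem_carrier[OF sub] by (auto simp: inj_on_def)
    show "(\<lambda>h. g \<otimes> h) ` H = H"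
    proof (intro equalityI subsetI)
      fix x assume "x \<in> (\<lambda>h. g \<otimes> h) ` H" then show "x \<in> H" using sub g by (auto intro: subgroup.m_closed)
    next
      fix x assume x: "x \<in> H"
      have xc: "x \<in> carrier G" using subgroup.mem_carrier[OF sub x] .
      have "x = g \<otimes> (inv g \<otimes> x)" using gc xc by (simp add: m_assoc[symmetric])
      moreover have "inv g \<otimes> x \<in> H" using sub g x by (auto intro: subgroup.m_closed subgroup.m_inv_closed)
      ultimately show "x \<in> (\<lambda>h. g \<otimes> h) ` H" by blast
    qed
  qed
qed

lemma irr_inv_mult:
  assumes sub: "subgroup H G" and irr: "irreducible_mrep G H (d, \<rho>)" and h: "h \<in> H"
  shows "mat_mult d (\<rho> (inv h)) (\<rho> h) = mat_id d"
proof -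
  have ih: "inv h \<in> H" using sub h by (rule subgroup.m_inv_closed)
  have hc: "h \<in> carrier G" using subgroup.mem_carrier[OF sub h] .
  have "mat_mult d (\<rho> (inv h)) (\<rho> h) = \<rho> (inv h \<otimes> h)" using irr_props(4)[OF irr ih h] by simp
  also have "\<dots> = \<rho> \<one>" using hc by simp
  also have "\<dots> = mat_id d" using irr_props(3)[OF irr] by simp
  finally show ?thesis .
qed

lemma orth_P:
  assumes sub: "subgroup H G" and fin: "finite H"
    and irr1: "irreducible_mrep G H (e, \<sigma>)" and irr: "irreducible_mrep G H (d, \<rho>)"
  defines "P \<equiv> (\<lambda>i k. \<Sum>h\<in>H. \<sigma> h i 0 * \<rho> (inv h) 0 k)"
  shows "\<forall>i k. e \<le> i \<or> d \<le> k \<longrightarrow> P i k = 0"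
    "\<forall>g\<in>H. mat_mult e (\<sigma> g) P = mat_mult d P (\<rho> g)"
proof -
  show "\<forall>i k. e \<le> i \<or> d \<le> k \<longrightarrow> P i k = 0"
    unfolding P_def using irr_props(2)[OF irr1] irr_props(2)[OF irr] subgroup.m_inv_closed[OF sub]
    by (auto intro!: sum.neutral)
  show "\<forall>g\<in>H. mat_mult e (\<sigma> g) P = mat_mult d P (\<rho> g)"
  proof (intro ballI ext)
    fix g i k assume g: "g \<in> H"
    have gc: "g \<in> carrier G" using subgroup.mem_carrier[OF sub g] .
    have "mat_mult e (\<sigma> g) P i k = (\<Sum>h\<in>H. (\<Sum>l<e. \<sigma> g i l * \<sigma> h l 0) * \<rho> (inv h) 0 k)"
      unfolding mat_mult_def P_def by (simp add: sum_distrib_left sum_distrib_right sum.swap[of _ H] mult.assoc)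
    also have "\<dots> = (\<Sum>h\<in>H. \<sigma> (g \<otimes> h) i 0 * \<rho> (inv h) 0 k)"
      using irr_props(4)[OF irr1 g] by (simp add: mat_mult_def)
    also have "\<dots> = (\<Sum>h\<in>H. \<sigma> (g \<otimes> h) i 0 * \<rho> (inv (g \<otimes> h) \<otimes> g) 0 k)"
      by (rule sum.cong) (use gc subgroup.mem_carrier[OF sub] inv_prod_cancel in auto)
    also have "\<dots> = (\<Sum>h\<in>H. \<sigma> h i 0 * \<rho> (inv h \<otimes> g) 0 k)"
      using sum.reindex_bij_betw[OF left_mult_bij[OF sub g], of "\<lambda>h. \<sigma> h i 0 * \<rho> (inv h \<otimes> g) 0 k"]
      by simp
    also have "\<dots> = (\<Sum>h\<in>H. \<sigma> h i 0 * (\<Sum>l<d. \<rho> (inv h) 0 l * \<rho> g l k))"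
      by (rule sum.cong) (use irr_props(4)[OF irr _ g] subgroup.m_inv_closed[OF sub] in \<open>auto simp: mat_mult_def\<close>)
    also have "\<dots> = mat_mult d P (\<rho> g) i k"
      unfolding mat_mult_def P_def by (simp add: sum_distrib_left sum_distrib_right sum.swap[of _ H] mult.assoc)
    finally show "mat_mult e (\<sigma> g) P i k = mat_mult d P (\<rho> g) i k" .
  qed
qed

lemma orth_neq:
  assumes sub: "subgroup H G" and fin: "finite H" and R: "complete_irreps G H R"
    and r: "(d, \<rho>) \<in> R" and s: "(e, \<sigma>) \<in> R" and ne: "(d, \<rho>) \<noteq> (e, \<sigma>)"
  shows "(\<Sum>h\<in>H. \<sigma> h 0 0 * \<rho> (inv h) 0 0) = 0"
proof (rule ccontr)
  assume nz: "(\<Sum>h\<in>H. \<sigma> h 0 0 * \<rho> (inv h) 0 0) \<noteq> 0"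
  have irr1: "irreducible_mrep G H (e, \<sigma>)" using complete_irrepsD(1)[OF R s] .
  have irr: "irreducible_mrep G H (d, \<rho>)" using complete_irrepsD(1)[OF R r] .
  note o = orth_P[OF sub fin irr1 irr]
  have "equiv_mrep H (d, \<rho>) (e, \<sigma>)" by (rule schur_neq[OF irr1 irr o(1) o(2), of 0 0]) (use nz in simp)
  then show False using complete_irrepsD(2)[OF R r s] ne by simp
qed

lemma orth_eq:
  assumes sub: "subgroup H G" and fin: "finite H" and R: "complete_irreps G H R"
    and r: "(d, \<rho>) \<in> R"
  shows "(\<Sum>h\<in>H. \<rho> h 0 0 * \<rho> (inv h) 0 0) \<noteq> 0"
proof -
  have irr: "irreducible_mrep G H (d, \<rho>)" using complete_irrepsD(1)[OF R r] .
  have d: "0 < d" using irr_props(1)[OF irr] .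
  define P where "P = (\<lambda>i k. \<Sum>h\<in>H. \<rho> h i 0 * \<rho> (inv h) 0 k)"
  note o = orth_P[OF sub fin irr irr]
  have o1: "\<forall>i k. d \<le> i \<or> d \<le> k \<longrightarrow> P i k = 0" using o(1) by (simp add: P_def)
  have o2: "\<forall>g\<in>H. mat_mult d (\<rho> g) P = mat_mult d P (\<rho> g)" using o(2) by (simp add: P_def)
  obtain c where c: "\<forall>i k. P i k = c * mat_id d i k" using schur_eq[OF irr o1 o2] by blast
  have "(\<Sum>i<d. P i i) = (\<Sum>h\<in>H. \<Sum>i<d. \<rho> (inv h) 0 i * \<rho> h i 0)"
    unfolding P_def by (subst sum.swap) (simp add: mult.commute)
  also have "\<dots> = (\<Sum>h\<in>H. mat_mult d (\<rho> (inv h)) (\<rho> h) 0 0)" by (simp add: mat_mult_def)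
  also have "\<dots> = (\<Sum>h\<in>H. 1)"
    by (rule sum.cong) (use irr_inv_mult[OF sub irr] d in \<open>auto simp: mat_id_def\<close>)
  also have "\<dots> = of_nat (card H)" by simp
  finally have tr: "(\<Sum>i<d. P i i) = of_nat (card H)" .
  have "(\<Sum>i<d. P i i) = of_nat d * c" using c by (simp add: mat_id_def)
  moreover have "card H \<noteq> 0" using fin subgroup.one_closed[OF sub] by (auto simp: card_eq_0_iff)
  ultimately have "c \<noteq> 0" using tr by auto
  then show ?thesis using c d by (simp add: P_def mat_id_def)
qed

lemma irreps_finite:
  assumes sub: "subgroup H G" and fin: "finite H" and R: "complete_irreps G H R"
  shows "finite R"
proof -
  define f where "f r = (\<lambda>h. if h \<in> H then snd r h 0 0 else 0 :: complex)" for r :: "'a mrep"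
  define L where "L s w = (\<Sum>h\<in>H. w h * f s (inv h))" for s w
  have ih: "\<And>h. h \<in> H \<Longrightarrow> inv h \<in> H" using subgroup.m_inv_closed[OF sub] .
  have Lrs: "L s (f r) = (if r = s then L s (f s) else 0)" if "r \<in> R" "s \<in> R" for r s
  proof (cases "r = s")
    case False
    obtain d \<rho> where r: "r = (d, \<rho>)" by (cases r)
    obtain e \<sigma> where s: "s = (e, \<sigma>)" by (cases s)
    have "L s (f r) = (\<Sum>h\<in>H. \<rho> h 0 0 * \<sigma> (inv h) 0 0)"
      unfolding L_def f_def r s using ih by (auto intro!: sum.cong)
    also have "\<dots> = 0" using orth_neq[OF sub fin R, of e \<sigma> d \<rho>] that False r s by auto
    finally show ?thesis using False by simp
  qed simp
  have Lss: "L s (f s) \<noteq> 0" if "s \<in> R" for s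
  proof -
    obtain d \<rho> where s: "s = (d, \<rho>)" by (cases s)
    have "L s (f s) = (\<Sum>h\<in>H. \<rho> h 0 0 * \<rho> (inv h) 0 0)"
      unfolding L_def f_def s using ih by (auto intro!: sum.cong)
    then show ?thesis using orth_eq[OF sub fin R, of d \<rho>] that s by simp
  qed
  have inj: "inj_on f R"
  proof
    fix r s assume r: "r \<in> R" and s: "s \<in> R" and e: "f r = f s"
    show "r = s" using Lrs[OF r s] Lss[OF s] e by (auto split: if_splits)
  qed
  define ind where "ind h = (\<lambda>g. if g = h then 1 else 0 :: complex)" for h :: 'a
  have sp: "f ` R \<subseteq> fv.span (ind ` H)"
  proof
    fix w assume "w \<in> f ` R"
    then obtain r where w: "w = f r" by auto
    have "w = (\<Sum>h\<in>H. (\<lambda>x. f r h * ind h x))"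
    proof
      fix g
      show "w g = (\<Sum>h\<in>H. (\<lambda>x. f r h * ind h x)) g"
      proof (cases "g \<in> H")
        case True
        have "(\<Sum>h\<in>H. (\<lambda>x. f r h * ind h x)) g = (\<Sum>h\<in>{g}. f r h * ind h g)"
          unfolding sum_fun_apply by (rule sum.mono_neutral_right) (use fin True in \<open>auto simp: ind_def\<close>)
        then show ?thesis using w by (simp add: ind_def)
      next
        case False
        then show ?thesis using w by (auto simp: sum_fun_apply ind_def f_def intro!: sum.neutral)
      qed
    qed
    then show "w \<in> fv.span (ind ` H)"
      by (simp, intro fv.span_sum fv.span_scale fv.span_base) auto
  qed
  have indep: "fv.independent (f ` R)"
    unfolding fv.independent_explicit_module
  proof (intro allI impI)
    fix T u v
    assume T1: "finite T" and T2: "T \<subseteq> f ` R" and T3: "(\<Sum>v\<in>T. (\<lambda>x. u v * v x)) = 0" and v: "v \<in> T"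
    obtain s where s: "s \<in> R" "v = f s" using T2 v by auto
    have Llin: "L s (\<Sum>w\<in>T. (\<lambda>x. u w * w x)) = (\<Sum>w\<in>T. u w * L s w)"
      unfolding L_def sum_fun_apply by (simp add: sum_distrib_left sum_distrib_right sum.swap[of _ H] mult.assoc)
    have "L s (\<Sum>w\<in>T. (\<lambda>x. u w * w x)) = 0" using T3 by (simp add: L_def)
    moreover have "(\<Sum>w\<in>T. u w * L s w) = u v * L s v"
    proof -
      have "(\<Sum>w\<in>T. u w * L s w) = (\<Sum>w\<in>{v}. u w * L s w)"
      proof (rule sum.mono_neutral_right)
        show "\<forall>w\<in>T - {v}. u w * L s w = 0"
        proof
          fix w assume w: "w \<in> T - {v}"
          then obtain r where r: "r \<in> R" "w = f r" using T2 by auto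
          with w s have "r \<noteq> s" by auto
          then show "u w * L s w = 0" using Lrs[OF r(1) s(1)] r by simp
        qed
      qed (use T1 v in auto)
      then show ?thesis by simp
    qed
    ultimately have "u v * L s v = 0" using Llin by simp
    then show "u v = 0" using Lss[OF s(1)] s by simp
  qed
  have "finite (f ` R)" using fv.independent_span_bound[OF _ indep sp] fin by auto
  then show ?thesis using inj finite_image_iff by blast
qed

end




definition orb :: "'g set \<Rightarrow> ('g \<Rightarrow> 'x \<Rightarrow> 'x) \<Rightarrow> 'x \<Rightarrow> 'x set" where
  "orb K \<phi> x = {\<phi> k x | k. k \<in> K}"

lemma sub_orbits_orb: "sub_orbits K X \<phi> = orb K \<phi> ` X"
  by (auto simp: sub_orbits_def orb_def)

context
  fixes G :: "('g, 'm) monoid_scheme" and X :: "'x set" and \<phi> :: "'g \<Rightarrow> 'x \<Rightarrow> 'x"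
  assumes act: "group_action G X \<phi>"
begin

lemma grpG: "group G"
  by (rule group_hom.axioms(1)[OF group_action.group_hom[OF act]])

lemma phi_one: "x \<in> X \<Longrightarrow> \<phi> \<one>\<^bsub>G\<^esub> x = x"
  by (simp add: group_action.id_eq_one[OF act, symmetric])

lemma phi_comp: "x \<in> X \<Longrightarrow> g \<in> carrier G \<Longrightarrow> h \<in> carrier G \<Longrightarrow> \<phi> (g \<otimes>\<^bsub>G\<^esub> h) x = \<phi> g (\<phi> h x)"
  by (rule group_action.composition_rule[OF act])

lemma phi_in: "x \<in> X \<Longrightarrow> g \<in> carrier G \<Longrightarrow> \<phi> g x \<in> X"
  by (rule group_action.element_image[OF act _ _ refl])

lemma orb_self: assumes K: "subgroup K G" and x: "x \<in> X" shows "x \<in> orb K \<phi> x"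
proof -
  have "x = \<phi> \<one>\<^bsub>G\<^esub> x" using phi_one[OF x] by simp
  moreover have "\<one>\<^bsub>G\<^esub> \<in> K" by (rule subgroup.one_closed[OF K])
  ultimately show ?thesis unfolding orb_def by blast
qed

lemma orb_sub: assumes K: "subgroup K G" and x: "x \<in> X" shows "orb K \<phi> x \<subseteq> X"
  unfolding orb_def using phi_in[OF x] subgroup.mem_carrier[OF K] by blast

lemma orb_eq:
  assumes K: "subgroup K G" and x: "x \<in> X" and y: "y \<in> orb K \<phi> x"
  shows "orb K \<phi> y = orb K \<phi> x"
proof -
  interpret group G by (rule grpG)
  obtain k where k: "k \<in> K" "y = \<phi> k x" using y by (auto simp: orb_def)
  have kc: "k \<in> carrier G" using subgroup.mem_carrier[OF K k(1)] .
  have yX: "y \<in> X" using phi_in[OF x kc] k(2) by simp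
  show ?thesis
  proof (intro equalityI subsetI)
    fix z assume "z \<in> orb K \<phi> y"
    then obtain k' where k': "k' \<in> K" "z = \<phi> k' y" by (auto simp: orb_def)
    have k'c: "k' \<in> carrier G" using subgroup.mem_carrier[OF K k'(1)] .
    have "z = \<phi> (k' \<otimes>\<^bsub>G\<^esub> k) x" using phi_comp[OF x k'c kc] k k' by simp
    moreover have "k' \<otimes>\<^bsub>G\<^esub> k \<in> K" using subgroup.m_closed[OF K k'(1) k(1)] .
    ultimately show "z \<in> orb K \<phi> x" unfolding orb_def by blast
  next
    fix z assume "z \<in> orb K \<phi> x"
    then obtain k' where k': "k' \<in> K" "z = \<phi> k' x" by (auto simp: orb_def)
    have k'c: "k' \<in> carrier G" using subgroup.mem_carrier[OF K k'(1)] .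
    have ikc: "inv\<^bsub>G\<^esub> k \<in> carrier G" using kc by simp
    have "\<phi> (inv\<^bsub>G\<^esub> k) y = \<phi> (inv\<^bsub>G\<^esub> k \<otimes>\<^bsub>G\<^esub> k) x"
      using phi_comp[OF x ikc kc] k(2) by simp
    also have "\<dots> = x" using kc phi_one[OF x] by simp
    finally have e: "\<phi> (inv\<^bsub>G\<^esub> k) y = x" .
    have "\<phi> (k' \<otimes>\<^bsub>G\<^esub> inv\<^bsub>G\<^esub> k) y = \<phi> k' (\<phi> (inv\<^bsub>G\<^esub> k) y)"
      by (rule phi_comp[OF yX k'c ikc])
    then have "z = \<phi> (k' \<otimes>\<^bsub>G\<^esub> inv\<^bsub>G\<^esub> k) y" using e k' by simp
    moreover have "k' \<otimes>\<^bsub>G\<^esub> inv\<^bsub>G\<^esub> k \<in> K"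
      using subgroup.m_closed[OF K k'(1) subgroup.m_inv_closed[OF K k(1)]] .
    ultimately show "z \<in> orb K \<phi> y" unfolding orb_def by blast
  qed
qed

lemma orb_disj:
  assumes K: "subgroup K G" and x: "x \<in> X" and y: "y \<in> X" and ne: "orb K \<phi> x \<inter> orb K \<phi> y \<noteq> {}"
  shows "orb K \<phi> x = orb K \<phi> y"
proof -
  obtain z where zx: "z \<in> orb K \<phi> x" and zy: "z \<in> orb K \<phi> y" using ne by auto
  have "orb K \<phi> z = orb K \<phi> x" by (rule orb_eq[OF K x zx])
  moreover have "orb K \<phi> z = orb K \<phi> y" by (rule orb_eq[OF K y zy])
  ultimately show ?thesis by simp
qed

lemma orb_stable:
  assumes K: "subgroup K G" and H: "subgroup H G" and HK: "H \<subseteq> K" and x: "x \<in> X"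
  shows "hstable G X \<phi> H (orb K \<phi> x)"
  unfolding hstable_def
proof (intro conjI ballI)
  show "orb K \<phi> x \<subseteq> X" by (rule orb_sub[OF K x])
  fix h y assume h: "h \<in> H" and y: "y \<in> orb K \<phi> x"
  have "orb K \<phi> y = orb K \<phi> x" by (rule orb_eq[OF K x y])
  moreover have "\<phi> h y \<in> orb K \<phi> y" using h HK by (auto simp: orb_def)
  ultimately show "\<phi> h y \<in> orb K \<phi> x" by simp
qed

lemma orb_nest:
  assumes K: "subgroup K G" and H: "subgroup H G" and HK: "H \<subseteq> K" and x: "x \<in> X" and z: "z \<in> X"
    and ne: "orb K \<phi> x \<inter> orb H \<phi> z \<noteq> {}"
  shows "orb H \<phi> z \<subseteq> orb K \<phi> x"
proof -
  obtain w where w: "w \<in> orb K \<phi> x" "w \<in> orb H \<phi> z" using ne by auto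
  have wX: "w \<in> X" using orb_sub[OF H z] w(2) by auto
  have "orb H \<phi> z = orb H \<phi> w" using orb_eq[OF H z w(2)] by simp
  also have "\<dots> \<subseteq> orb K \<phi> w" using HK by (auto simp: orb_def)
  also have "\<dots> = orb K \<phi> x" using orb_eq[OF K x w(1)] .
  finally show ?thesis .
qed

lemma union_orbits: assumes K: "subgroup K G" shows "\<Union> (sub_orbits K X \<phi>) = X"
proof (intro equalityI subsetI)
  fix x assume "x \<in> \<Union> (sub_orbits K X \<phi>)"
  then obtain y where "y \<in> X" "x \<in> orb K \<phi> y" unfolding sub_orbits_orb by auto
  then show "x \<in> X" using orb_sub[OF K] by blast
next
  fix x assume "x \<in> X"
  then show "x \<in> \<Union> (sub_orbits K X \<phi>)" unfolding sub_orbits_orb using orb_self[OF K] by blast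
qed

end




lemma concat_lin_comb_in:
  assumes len: "length Ys = length Cs"
    and bases: "\<forall>l<length Ys. is_basis (Ys ! l) (Cs ! l)"
    and disj: "\<forall>l<length Ys. \<forall>l'<length Ys. l \<noteq> l' \<longrightarrow> Ys ! l \<inter> Ys ! l' = {}"
    and l: "l < length Ys" and x: "x \<in> Ys ! l"
  shows "lin_comb (concat Cs) c x = lin_comb (Cs ! l) (\<lambda>p. c (off (map length Cs) l + p)) x"
proof -
  let ?ls = "map length Cs"
  have l': "l < length ?ls" using l len by simp
  have "lin_comb (concat Cs) c x = (\<Sum>i<sum_list ?ls. c i * (concat Cs ! i) x)"
    by (simp add: lin_comb_def length_concat_sum)
  also have "\<dots> = (\<Sum>p<?ls ! l. c (off ?ls l + p) * (concat Cs ! (off ?ls l + p)) x)"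
  proof (rule sum_seg_only[OF l'])
    fix i assume i: "i < sum_list ?ls" "bk ?ls i \<noteq> l"
    have b: "bk ?ls i < length ?ls" "ps ?ls i < ?ls ! bk ?ls i" using bk_ps_props[OF i(1)] by auto
    have "concat Cs ! i = Cs ! bk ?ls i ! ps ?ls i" using nth_concat_bk[of i Cs] i(1) by (simp add: length_concat_sum)
    moreover have "Cs ! bk ?ls i ! ps ?ls i \<in> CV (Ys ! bk ?ls i)"
      using basis_in_CV[of "Ys ! bk ?ls i" "Cs ! bk ?ls i" "ps ?ls i"] bases b len by auto
    moreover have "x \<notin> Ys ! bk ?ls i" using disj x i(2) b(1) l len by auto
    ultimately show "c i * (concat Cs ! i) x = 0" by (simp add: CV_def)
  qed
  also have "\<dots> = lin_comb (Cs ! l) (\<lambda>p. c (off ?ls l + p)) x"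
  proof -
    have "concat Cs ! (off ?ls l + p) = Cs ! l ! p" if "p < ?ls ! l" for p
      using nth_concat_bk[of "off ?ls l + p" Cs] off_lt[OF l' that] bk_ps_off[OF l' that]
      by (simp add: length_concat_sum)
    then show ?thesis using l' by (auto simp: lin_comb_def intro!: sum.cong)
  qed
  finally show ?thesis .
qed

lemma concat_in_CV:
  assumes len: "length Ys = length Cs"
    and bases: "\<forall>l<length Ys. is_basis (Ys ! l) (Cs ! l)"
    and i: "i < length (concat Cs)"
  shows "concat Cs ! i \<in> CV (Ys ! bk (map length Cs) i)"
proof -
  let ?ls = "map length Cs"
  have N: "length (concat Cs) = sum_list ?ls" by (rule length_concat_sum)
  have b: "bk ?ls i < length ?ls" "ps ?ls i < ?ls ! bk ?ls i" using bk_ps_props[of i ?ls] i N by auto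
  show ?thesis using nth_concat_bk[OF i] basis_in_CV[of "Ys ! bk ?ls i" "Cs ! bk ?ls i" "ps ?ls i"] bases b len
    by auto
qed

lemma concat_basis:
  assumes len: "length Ys = length Cs"
    and bases: "\<forall>l<length Ys. is_basis (Ys ! l) (Cs ! l)"
    and disj: "\<forall>l<length Ys. \<forall>l'<length Ys. l \<noteq> l' \<longrightarrow> Ys ! l \<inter> Ys ! l' = {}"
  shows "is_basis (\<Union> (set Ys)) (concat Cs)"
    and "\<And>v i. v \<in> CV (\<Union> (set Ys)) \<Longrightarrow> i < length (concat Cs) \<Longrightarrow>
          coord (concat Cs) v i = coord (Cs ! bk (map length Cs) i) (restr (Ys ! bk (map length Cs) i) v) (ps (map length Cs) i)"
proof -
  let ?ls = "map length Cs"
  let ?B = "concat Cs"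
  have N: "length ?B = sum_list ?ls" by (rule length_concat_sum)
  have lout: "lin_comb ?B c x = 0" if "x \<notin> \<Union> (set Ys)" for c x
  proof -
    have "(?B ! i) x = 0" if "i < length ?B" for i
    proof -
      have "bk ?ls i < length Ys" using bk_ps_props[of i ?ls] that len N by auto
      then show ?thesis using concat_in_CV[OF len bases that] \<open>x \<notin> \<Union> (set Ys)\<close>
        by (auto simp: CV_def)
    qed
    then show ?thesis by (simp add: lin_comb_def)
  qed
  have cf: "v = lin_comb ?B (\<lambda>i. if i < length ?B then coord (Cs ! bk ?ls i) (restr (Ys ! bk ?ls i) v) (ps ?ls i) else 0)"
    if v: "v \<in> CV (\<Union> (set Ys))" for v
  proof
    fix x
    define cf where "cf = (\<lambda>i. if i < length ?B then coord (Cs ! bk ?ls i) (restr (Ys ! bk ?ls i) v) (ps ?ls i) else 0)"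
    show "v x = lin_comb ?B cf x" unfolding cf_def[symmetric]
    proof (cases "x \<in> \<Union> (set Ys)")
      case False then show ?thesis using lout v by (auto simp: CV_def)
    next
      case True
      then obtain l where l: "l < length Ys" "x \<in> Ys ! l" by (auto simp: in_set_conv_nth)
      have l': "l < length ?ls" using l len by simp
      have Bl: "is_basis (Ys ! l) (Cs ! l)" using bases l by auto
      have rv: "restr (Ys ! l) v \<in> CV (Ys ! l)" by (auto simp: restr_def CV_def)
      have "lin_comb ?B cf x = lin_comb (Cs ! l) (\<lambda>p. cf (off ?ls l + p)) x"
        by (rule concat_lin_comb_in[OF len bases disj l])
      also have "\<dots> = lin_comb (Cs ! l) (coord (Cs ! l) (restr (Ys ! l) v)) x"
      proof -
        have "cf (off ?ls l + p) = coord (Cs ! l) (restr (Ys ! l) v) p" if "p < length (Cs ! l)" for p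
        proof -
          have pl: "p < ?ls ! l" using that l' by simp
          show ?thesis using off_lt[OF l' pl] bk_ps_off[OF l' pl] by (simp add: cf_def N)
        qed
        then show ?thesis by (simp add: lin_comb_def)
      qed
      also have "\<dots> = restr (Ys ! l) v x" by (rule fun_cong[OF conjunct1[OF coord_ex[OF Bl rv]], symmetric])
      also have "\<dots> = v x" using l by (simp add: restr_def)
      finally show ?thesis by simp
    qed
  qed
  show B: "is_basis (\<Union> (set Ys)) ?B"
    unfolding is_basis_def
  proof (intro conjI allI impI ballI)
    show "set ?B \<subseteq> CV (\<Union> (set Ys))"
    proof
      fix f assume "f \<in> set ?B"
      then obtain i where i: "i < length ?B" "f = ?B ! i" using in_set_conv_nth[of f ?B] by blast
      have "bk ?ls i < length Ys" using bk_ps_props[of i ?ls] i len N by auto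
      then show "f \<in> CV (\<Union> (set Ys))" using concat_in_CV[OF len bases i(1)] i(2)
        using nth_mem[of "bk ?ls i" Ys] by (auto simp: CV_def)
    qed
  next
    fix c i assume z: "lin_comb ?B c = (\<lambda>_. 0)" and i: "i < length ?B"
    define l where "l = bk ?ls i"
    have b: "l < length ?ls" "ps ?ls i < ?ls ! l" "off ?ls l + ps ?ls i = i"
      using bk_ps_props[of i ?ls] i N by (auto simp: l_def)
    have l: "l < length Ys" using b len by simp
    have Bl: "is_basis (Ys ! l) (Cs ! l)" using bases l by auto
    have "lin_comb (Cs ! l) (\<lambda>p. c (off ?ls l + p)) = (\<lambda>_. 0)"
    proof
      fix x show "lin_comb (Cs ! l) (\<lambda>p. c (off ?ls l + p)) x = 0"
      proof (cases "x \<in> Ys ! l")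
        case True then show ?thesis using concat_lin_comb_in[OF len bases disj l True, of c] z by simp
      next
        case False
        have "(Cs ! l ! p) x = 0" if "p < length (Cs ! l)" for p
          using basis_in_CV[OF Bl that] False by (simp add: CV_def)
        then show ?thesis by (simp add: lin_comb_def)
      qed
    qed
    moreover have "ps ?ls i < length (Cs ! l)" using b l len by simp
    ultimately have "c (off ?ls l + ps ?ls i) = 0" using Bl unfolding is_basis_def by blast
    then show "c i = 0" using b by simp
  next
    fix v assume "v \<in> CV (\<Union> (set Ys))"
    then show "\<exists>c. v = lin_comb ?B c" using cf by blast
  qed
  fix v i assume v: "v \<in> CV (\<Union> (set Ys))" and i: "i < length ?B"
  have "coord ?B v = (\<lambda>i. if i < length ?B then coord (Cs ! bk ?ls i) (restr (Ys ! bk ?ls i) v) (ps ?ls i) else 0)"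
    by (rule coord_eq[OF B cf[OF v]]) auto
  then show "coord ?B v i = coord (Cs ! bk ?ls i) (restr (Ys ! bk ?ls i) v) (ps ?ls i)" using i by simp
qed




lemma orbital_data:
  assumes "orbital_sa G X \<phi> Gs Rs j B" and "i0 \<in> {1..j}"
  shows "\<exists>Ys Cs bsf. length Ys = length Cs \<and> distinct Ys \<and> set Ys = sub_orbits (Gs j) X \<phi> \<and> B = concat Cs \<and>
     (\<forall>l<length Ys. is_basis (Ys ! l) (Cs ! l) \<and> set (bsf l) \<subseteq> Rs i0 \<and>
        adapted_blocks G X \<phi> (Gs i0) (Cs ! l) (bsf l))"
proof -
  obtain Ys Cs where d: "length Ys = length Cs" "distinct Ys" "set Ys = sub_orbits (Gs j) X \<phi>"
    "B = concat Cs" "\<forall>l<length Ys. \<forall>i\<in>{1..j}. sym_adapted G X \<phi> (Gs i) (Rs i) (Ys ! l) (Cs ! l)"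
    using assms(1) unfolding orbital_sa_def by blast
  have "\<forall>l. \<exists>bs. l < length Ys \<longrightarrow> is_basis (Ys ! l) (Cs ! l) \<and> set bs \<subseteq> Rs i0 \<and>
        adapted_blocks G X \<phi> (Gs i0) (Cs ! l) bs"
    using d(5) assms(2) unfolding sym_adapted_def by blast
  then obtain bsf where "\<forall>l. l < length Ys \<longrightarrow> is_basis (Ys ! l) (Cs ! l) \<and> set (bsf l) \<subseteq> Rs i0 \<and>
        adapted_blocks G X \<phi> (Gs i0) (Cs ! l) (bsf l)" by metis
  then show ?thesis using d by blast
qed

lemma orbit_list_disj:
  assumes act: "group_action G X \<phi>" and K: "subgroup K G" and dist: "distinct Ys"
    and set: "set Ys = sub_orbits K X \<phi>"
  shows "\<forall>l<length Ys. \<forall>l'<length Ys. l \<noteq> l' \<longrightarrow> Ys ! l \<inter> Ys ! l' = {}"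
proof (intro allI impI)
  fix l l' assume l: "l < length Ys" and l': "l' < length Ys" and ne: "l \<noteq> l'"
  have "Ys ! l \<in> orb K \<phi> ` X" "Ys ! l' \<in> orb K \<phi> ` X" using l l' set sub_orbits_orb by (metis nth_mem)+
  then obtain x y where xy: "x \<in> X" "y \<in> X" "Ys ! l = orb K \<phi> x" "Ys ! l' = orb K \<phi> y" by blast
  have "Ys ! l \<noteq> Ys ! l'" using dist l l' ne by (simp add: nth_eq_iff_index_eq)
  then show "Ys ! l \<inter> Ys ! l' = {}" using orb_disj[OF act K xy(1,2)] xy(3,4) by auto
qed

lemma seg_card:
  assumes l: "l < length Cs"
  shows "card {i. i < sum_list (map length Cs) \<and> bk (map length Cs) i = l \<and> Q (ps (map length Cs) i)}
       = card {p. p < length (Cs ! l) \<and> Q p}"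
proof -
  let ?ls = "map length Cs"
  have l': "l < length ?ls" using l by simp
  have "bij_betw (\<lambda>p. off ?ls l + p) {p. p < length (Cs ! l) \<and> Q p}
      {i. i < sum_list ?ls \<and> bk ?ls i = l \<and> Q (ps ?ls i)}"
    unfolding bij_betw_def
  proof
    show "inj_on (\<lambda>p. off ?ls l + p) {p. p < length (Cs ! l) \<and> Q p}" by (auto simp: inj_on_def)
    show "(\<lambda>p. off ?ls l + p) ` {p. p < length (Cs ! l) \<and> Q p} = {i. i < sum_list ?ls \<and> bk ?ls i = l \<and> Q (ps ?ls i)}"
    proof (intro equalityI subsetI)
      fix i assume "i \<in> (\<lambda>p. off ?ls l + p) ` {p. p < length (Cs ! l) \<and> Q p}"
      then obtain p where p: "p < length (Cs ! l)" "Q p" "i = off ?ls l + p" by auto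
      have p': "p < ?ls ! l" using p l by simp
      show "i \<in> {i. i < sum_list ?ls \<and> bk ?ls i = l \<and> Q (ps ?ls i)}"
        using off_lt[OF l' p'] bk_ps_off[OF l' p'] p by simp
    next
      fix i assume i: "i \<in> {i. i < sum_list ?ls \<and> bk ?ls i = l \<and> Q (ps ?ls i)}"
      then have "ps ?ls i < ?ls ! l" "off ?ls l + ps ?ls i = i" using bk_ps_props[of i ?ls] by auto
      then show "i \<in> (\<lambda>p. off ?ls l + p) ` {p. p < length (Cs ! l) \<and> Q p}"
        using i l by (auto intro!: image_eqI[where x="ps ?ls i"])
    qed
  qed
  from bij_betw_same_card[OF this] show ?thesis by simp
qed

lemma blocks_card:
  assumes ad: "adapted_blocks G X \<phi> H C bs" and q: "q < fst r"
  shows "card {p. p < length C \<and> bs ! bk (map fst bs) p = r \<and> ps (map fst bs) p = q}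
       = length (filter (\<lambda>s. s = r) bs)"
proof -
  have N: "length C = sum_list (map fst bs)" using ad by (simp add: adapted_blocks_def)
  have "card {p. p < length C \<and> bs ! bk (map fst bs) p = r \<and> ps (map fst bs) p = q}
      = card {a. a < length (map fst bs) \<and> bs ! a = r \<and> q < map fst bs ! a}"
    unfolding N by (rule card_pos_class)
  also have "\<dots> = card {a. a < length bs \<and> bs ! a = r}"
    using q by (intro arg_cong[where f=card]) auto
  also have "\<dots> = length (filter (\<lambda>s. s = r) bs)" by (simp add: length_filter_conv_card)
  finally show ?thesis .
qed




theorem theorem3:
  fixes G :: "('g, 'm) monoid_scheme" and X :: "'x set" and \<phi> :: "'g \<Rightarrow> 'x \<Rightarrow> 'x"
    and n j :: nat and Gs :: "nat \<Rightarrow> 'g set" and Rs :: "nat \<Rightarrow> 'g mrep set"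
    and Bs :: "nat \<Rightarrow> ('x \<Rightarrow> complex) list"
  assumes grp: "group G" and finG: "finite (carrier G)" and finX: "finite X"
    and act: "group_action G X \<phi>"
    and G1: "Gs 1 = {\<one>\<^bsub>G\<^esub>}" and Gn: "Gs n = carrier G"
    and sub: "\<forall>i\<in>{1..n}. subgroup (Gs i) G"
    and chain: "\<forall>i\<in>{1..<n}. Gs i \<subset> Gs (Suc i)"
    and irr: "\<forall>i\<in>{1..n}. complete_irreps G (Gs i) (Rs i)"
    and compat: "\<exists>B. \<forall>i\<in>{1..n}. sym_adapted G X \<phi> (Gs i) (Rs i) X B"
    and orb: "\<forall>i\<in>{1..n}. orbital_sa G X \<phi> Gs Rs i (Bs i)"
    and B1: "\<exists>xs. distinct xs \<and> set xs = X \<and> Bs 1 = map indic xs"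
    and j: "2 \<le> j" "j \<le> n"
  shows "nnz (card X) (card X) (change_basis (Bs j) (Bs (j - 1)))
           \<le> PhiX G X \<phi> (Gs j) (Gs (j - 1)) (Rs (j - 1))
       \<and> (\<forall>k<card X. card {i. i < card X \<and> change_basis (Bs j) (Bs (j - 1)) i k \<noteq> 0}
           \<le> KX G X \<phi> (Gs j) (Gs (j - 1)) (Rs (j - 1)))
       \<and> nnz (card X) (card X) (change_basis (Bs j) (Bs (j - 1)))
           \<le> KX G X \<phi> (Gs j) (Gs (j - 1)) (Rs (j - 1)) * card X"
proof -
  define K where "K = Gs j"
  define H where "H = Gs (j - 1)"
  define R where "R = Rs (j - 1)"
  define N where "N = card X"
  have j1: "j - 1 \<in> {1..n}" "j \<in> {1..n}" "j - 1 \<in> {1..j}" "j - 1 \<in> {1..j - 1}" using j by auto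
  have subK: "subgroup K G" using sub j1 by (simp add: K_def)
  have subH: "subgroup H G" using sub j1 by (simp add: H_def)
  have HK: "H \<subseteq> K"
  proof -
    have "j - 1 \<in> {1..<n}" using j by auto
    then have "Gs (j - 1) \<subset> Gs (Suc (j - 1))" using chain by blast
    moreover have "Suc (j - 1) = j" using j by simp
    ultimately show ?thesis by (auto simp: H_def K_def)
  qed
  have RH: "complete_irreps G H R" using irr j1 by (simp add: H_def R_def)
  have finH: "finite H" using finG subgroup.subset[OF subH] finite_subset by blast
  have Rfin: "finite R" by (rule group.irreps_finite[OF grp subH finH RH])
  have oj: "orbital_sa G X \<phi> Gs Rs j (Bs j)" using orb j1(2) by blast
  have oj1: "orbital_sa G X \<phi> Gs Rs (j - 1) (Bs (j - 1))" using orb j1(1) by blast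
  obtain Ys Cs bsY where Y: "length Ys = length Cs" "distinct Ys" "set Ys = sub_orbits K X \<phi>" "Bs j = concat Cs"
    "\<forall>l<length Ys. is_basis (Ys ! l) (Cs ! l) \<and> set (bsY l) \<subseteq> R \<and> adapted_blocks G X \<phi> H (Cs ! l) (bsY l)"
    using orbital_data[OF oj j1(3)] unfolding K_def H_def R_def by blast
  obtain Zs Ds bsZ where Z: "length Zs = length Ds" "distinct Zs" "set Zs = sub_orbits H X \<phi>" "Bs (j - 1) = concat Ds"
    "\<forall>m<length Zs. is_basis (Zs ! m) (Ds ! m) \<and> set (bsZ m) \<subseteq> R \<and> adapted_blocks G X \<phi> H (Ds ! m) (bsZ m)"
    using orbital_data[OF oj1 j1(4)] unfolding H_def R_def by blast
  have basY: "\<forall>l<length Ys. is_basis (Ys ! l) (Cs ! l)" using Y(5) by blast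
  have basZ: "\<forall>m<length Zs. is_basis (Zs ! m) (Ds ! m)" using Z(5) by blast
  have disjY: "\<forall>l<length Ys. \<forall>l'<length Ys. l \<noteq> l' \<longrightarrow> Ys ! l \<inter> Ys ! l' = {}"
    by (rule orbit_list_disj[OF act subK Y(2,3)])
  have disjZ: "\<forall>m<length Zs. \<forall>m'<length Zs. m \<noteq> m' \<longrightarrow> Zs ! m \<inter> Zs ! m' = {}"
    by (rule orbit_list_disj[OF act subH Z(2,3)])
  have UY: "\<Union> (set Ys) = X" using union_orbits[OF act subK] Y(3) by simp
  have UZ: "\<Union> (set Zs) = X" using union_orbits[OF act subH] Z(3) by simp
  note cbY = concat_basis[OF Y(1) basY disjY, unfolded UY, folded Y(4)]
  note cbZ = concat_basis[OF Z(1) basZ disjZ, unfolded UZ, folded Z(4)]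
  have NY: "length (Bs j) = N" using basis_length_card[OF finX cbY(1)] by (simp add: N_def)
  have NZ: "length (Bs (j - 1)) = N" using basis_length_card[OF finX cbZ(1)] by (simp add: N_def)
  define ls where "ls = map length Cs"
  define ms where "ms = map length Ds"
  have lsN: "sum_list ls = N" using NY Y(4) by (simp add: ls_def length_concat_sum)
  have msN: "sum_list ms = N" using NZ Z(4) by (simp add: ms_def length_concat_sum)
  have idxY: "bk ls i < length Ys \<and> ps ls i < length (Cs ! bk ls i) \<and> Bs j ! i = Cs ! bk ls i ! ps ls i"
    if "i < N" for i
    using bk_ps_props[of i ls] that lsN nth_concat_bk[of i Cs] Y(1,4) NY by (auto simp: ls_def)
  have idxZ: "bk ms k < length Zs \<and> ps ms k < length (Ds ! bk ms k) \<and> Bs (j - 1) ! k = Ds ! bk ms k ! ps ms k"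
    if "k < N" for k
    using bk_ps_props[of k ms] that msN nth_concat_bk[of k Ds] Z(1,4) NZ by (auto simp: ms_def)
  have orbY: "\<exists>y\<in>X. Ys ! l = orb K \<phi> y" if "l < length Ys" for l
    using Y(3) that sub_orbits_orb by (metis imageE nth_mem)
  have orbZ: "\<exists>z\<in>X. Zs ! m = orb H \<phi> z" if "m < length Zs" for m
    using Z(3) that sub_orbits_orb by (metis imageE nth_mem)
  have stY: "hstable G X \<phi> H (Ys ! l)" if "l < length Ys" for l
    using orbY[OF that] orb_stable[OF act subK subH HK] by auto
  have stZ: "hstable G X \<phi> H (Zs ! m)" if "m < length Zs" for m
    using orbZ[OF that] orb_stable[OF act subH subH order_refl] by auto
  define tY where "tY i = bsY (bk ls i) ! bk (map fst (bsY (bk ls i))) (ps ls i)" for i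
  define pY where "pY i = ps (map fst (bsY (bk ls i))) (ps ls i)" for i
  define tZ where "tZ k = bsZ (bk ms k) ! bk (map fst (bsZ (bk ms k))) (ps ms k)" for k
  define pZ where "pZ k = ps (map fst (bsZ (bk ms k))) (ps ms k)" for k
  define oZ where "oZ k = orb K \<phi> (SOME z. z \<in> Zs ! bk ms k)" for k
  define cls where "cls i = (Ys ! bk ls i, tY i, pY i)" for i
  define cls' where "cls' k = (oZ k, tZ k, pZ k)" for k
  have oZ_eq: "oZ k = Ys ! bk ls i" if k: "k < N" and i: "i < N" and ne: "Ys ! bk ls i \<inter> Zs ! bk ms k \<noteq> {}" for k i
  proof -
    obtain y where y: "y \<in> X" "Ys ! bk ls i = orb K \<phi> y" using orbY idxY[OF i] by blast
    obtain z where z: "z \<in> X" "Zs ! bk ms k = orb H \<phi> z" using orbZ idxZ[OF k] by blast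
    have sub: "Zs ! bk ms k \<subseteq> Ys ! bk ls i"
      using orb_nest[OF act subK subH HK y(1) z(1)] ne y z by simp
    have "z \<in> Zs ! bk ms k" using orb_self[OF act subH z(1)] z by simp
    then have s: "(SOME z. z \<in> Zs ! bk ms k) \<in> Zs ! bk ms k" by (rule someI)
    then have "(SOME z. z \<in> Zs ! bk ms k) \<in> orb K \<phi> y" using sub y by auto
    then show ?thesis using orb_eq[OF act subK y(1)] y by (simp add: oZ_def)
  qed
  define C where "C = change_basis (Bs j) (Bs (j - 1))"
  define C' where "C' = change_basis (Bs (j - 1)) (Bs j)"
  have R1: "cls i = cls' k" if i: "i < N" and k: "k < N" and nz: "C i k \<noteq> 0" for i k
  proof -
    define l where "l = bk ls i"
    define m where "m = bk ms k"
    note iY = idxY[OF i, folded l_def]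
    note kZ = idxZ[OF k, folded m_def]
    have vX: "Bs (j - 1) ! k \<in> CV X" using basis_in_CV[OF cbZ(1)] k NZ by simp
    have "C i k = coord (Cs ! l) (restr (Ys ! l) (Ds ! m ! ps ms k)) (ps ls i)"
      using cbY(2)[OF vX] i NY kZ by (simp add: C_def change_basis_def l_def ls_def)
    with nz have nz': "coord (Cs ! l) (restr (Ys ! l) (Ds ! m ! ps ms k)) (ps ls i) \<noteq> 0" by simp
    have s: "ps ls i < length (Cs ! l) \<and> bsY l ! bk (map fst (bsY l)) (ps ls i) = bsZ m ! bk (map fst (bsZ m)) (ps ms k)
         \<and> ps (map fst (bsY l)) (ps ls i) = ps (map fst (bsZ m)) (ps ms k)"
      using supp_restr[OF act subH stY[OF conjunct1[OF iY]] RH _ _ _ _ _ conjunct1[OF conjunct2[OF kZ]] nz']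
        Y(5) Z(5) iY kZ by blast
    have "restr (Ys ! l) (Ds ! m ! ps ms k) \<noteq> (\<lambda>_. 0)"
    proof
      assume "restr (Ys ! l) (Ds ! m ! ps ms k) = (\<lambda>_. 0)"
      then show False using nz' coord_zero[of "Ys ! l" "Cs ! l"] basY iY by simp
    qed
    then obtain x where x: "x \<in> Ys ! l" "(Ds ! m ! ps ms k) x \<noteq> 0" by (auto simp: restr_def fun_eq_iff split: if_splits)
    have "Ds ! m ! ps ms k \<in> CV (Zs ! m)" using basis_in_CV basZ kZ by blast
    then have "x \<in> Zs ! m" using x(2) by (auto simp: CV_def)
    then have "oZ k = Ys ! l" using oZ_eq[OF k i] x(1) by (auto simp: l_def m_def)
    then show ?thesis using s by (simp add: cls_def cls'_def tY_def pY_def tZ_def pZ_def l_def m_def)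
  qed
  have R2: "cls i = cls' k" if i: "i < N" and k: "k < N" and nz: "C' k i \<noteq> 0" for i k
  proof -
    define l where "l = bk ls i"
    define m where "m = bk ms k"
    note iY = idxY[OF i, folded l_def]
    note kZ = idxZ[OF k, folded m_def]
    have vX: "Bs j ! i \<in> CV X" using basis_in_CV[OF cbY(1)] i NY by simp
    have "C' k i = coord (Ds ! m) (restr (Zs ! m) (Cs ! l ! ps ls i)) (ps ms k)"
      using cbZ(2)[OF vX] k NZ iY by (simp add: C'_def change_basis_def m_def ms_def)
    with nz have nz': "coord (Ds ! m) (restr (Zs ! m) (Cs ! l ! ps ls i)) (ps ms k) \<noteq> 0" by simp
    have s: "ps ms k < length (Ds ! m) \<and> bsZ m ! bk (map fst (bsZ m)) (ps ms k) = bsY l ! bk (map fst (bsY l)) (ps ls i)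
         \<and> ps (map fst (bsZ m)) (ps ms k) = ps (map fst (bsY l)) (ps ls i)"
      using supp_restr[OF act subH stZ[OF conjunct1[OF kZ]] RH _ _ _ _ _ conjunct1[OF conjunct2[OF iY]] nz']
        Y(5) Z(5) iY kZ by blast
    have "restr (Zs ! m) (Cs ! l ! ps ls i) \<noteq> (\<lambda>_. 0)"
    proof
      assume "restr (Zs ! m) (Cs ! l ! ps ls i) = (\<lambda>_. 0)"
      then show False using nz' coord_zero[of "Zs ! m" "Ds ! m"] basZ kZ by simp
    qed
    then obtain x where x: "x \<in> Zs ! m" "(Cs ! l ! ps ls i) x \<noteq> 0" by (auto simp: restr_def fun_eq_iff split: if_splits)
    have "Cs ! l ! ps ls i \<in> CV (Ys ! l)" using basis_in_CV basY iY by blast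
    then have "x \<in> Ys ! l" using x(2) by (auto simp: CV_def)
    then have "oZ k = Ys ! l" using oZ_eq[OF k i] x(1) by (auto simp: l_def m_def)
    then show ?thesis using s by (simp add: cls_def cls'_def tY_def pY_def tZ_def pZ_def l_def m_def)
  qed
  have prod1: "(\<Sum>k<N. C i k * C' k i') = (if i = i' then 1 else 0)" if "i < N" "i' < N" for i i'
    using change_prod[OF cbY(1) cbZ(1), of i i'] that NY NZ by (simp add: C_def C'_def change_basis_def)
  have prod2: "(\<Sum>i<N. C' k i * C i k') = (if k = k' then 1 else 0)" if "k < N" "k' < N" for k k'
    using change_prod[OF cbZ(1) cbY(1), of k k'] that NY NZ by (simp add: C_def C'_def change_basis_def)
  define rows where "rows c = {i. i < N \<and> cls i = c}" for c
  define cols where "cols c = {k. k < N \<and> cls' k = c}" for c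
  have rc: "card (rows c) = card (cols c)" for c
  proof (rule rank_eq[where A=C and Bm=C'])
    show "finite (rows c)" "finite (cols c)" by (auto simp: rows_def cols_def)
  next
    fix i i' assume i: "i \<in> rows c" and i': "i' \<in> rows c"
    have "(\<Sum>k<N. C i k * C' k i') = (\<Sum>k\<in>cols c. C i k * C' k i')"
    proof (rule sum.mono_neutral_right)
      show "\<forall>k\<in>{..<N} - cols c. C i k * C' k i' = 0"
        using R2 i' by (auto simp: rows_def cols_def)
    qed (auto simp: cols_def)
    then show "(\<Sum>k\<in>cols c. C i k * C' k i') = (if i = i' then 1 else 0)"
      using prod1 i i' by (simp add: rows_def)
  next
    fix k k' assume k: "k \<in> cols c" and k': "k' \<in> cols c"
    have "(\<Sum>i<N. C' k i * C i k') = (\<Sum>i\<in>rows c. C' k i * C i k')"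
    proof (rule sum.mono_neutral_right)
      show "\<forall>i\<in>{..<N} - rows c. C' k i * C i k' = 0"
        using R1 k' by (auto simp: rows_def cols_def)
    qed (auto simp: rows_def)
    then show "(\<Sum>i\<in>rows c. C' k i * C i k') = (if k = k' then 1 else 0)"
      using prod2 k k' by (simp add: cols_def)
  qed
  have rowcard: "card (rows (Ys ! l, r, q)) = Defs.mult G X \<phi> H R (Ys ! l) r"
    if l: "l < length Ys" and q: "q < fst r" for l r q
  proof -
    define Q where "Q p = (bsY l ! bk (map fst (bsY l)) p = r \<and> ps (map fst (bsY l)) p = q)" for p
    have "rows (Ys ! l, r, q) = {i. i < sum_list ls \<and> bk ls i = l \<and> Q (ps ls i)}"
    proof (intro equalityI subsetI)
      fix i assume "i \<in> rows (Ys ! l, r, q)"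
      then have i: "i < N" "cls i = (Ys ! l, r, q)" by (auto simp: rows_def)
      have "Ys ! bk ls i = Ys ! l" using i(2) by (simp add: cls_def)
      then have "bk ls i = l" using Y(2) idxY[OF i(1)] l by (simp add: nth_eq_iff_index_eq)
      then show "i \<in> {i. i < sum_list ls \<and> bk ls i = l \<and> Q (ps ls i)}"
        using i lsN by (auto simp: cls_def tY_def pY_def Q_def)
    next
      fix i assume "i \<in> {i. i < sum_list ls \<and> bk ls i = l \<and> Q (ps ls i)}"
      then show "i \<in> rows (Ys ! l, r, q)" using lsN by (auto simp: rows_def cls_def tY_def pY_def Q_def)
    qed
    then have "card (rows (Ys ! l, r, q)) = card {p. p < length (Cs ! l) \<and> Q p}"
      using seg_card[of l Cs Q] l Y(1) by (simp add: ls_def)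
    also have "\<dots> = length (filter (\<lambda>s. s = r) (bsY l))"
      unfolding Q_def by (rule blocks_card[OF _ q]) (use Y(5) l in blast)
    also have "\<dots> = Defs.mult G X \<phi> H R (Ys ! l) r"
      by (rule mult_eq[OF act subH stY[OF l] RH, symmetric]) (use Y(5) l in blast)+
    finally show ?thesis .
  qed
  define Fl where "Fl = Sigma (set Ys) (\<lambda>Y. Sigma R (\<lambda>r. {..<fst r}))"
  have finFl: "finite Fl" unfolding Fl_def using Rfin by (intro finite_SigmaI) auto
  have clsFl: "cls i \<in> Fl" if i: "i < N" for i
  proof -
    define l where "l = bk ls i"
    note iY = idxY[OF i, folded l_def]
    have ad: "adapted_blocks G X \<phi> H (Cs ! l) (bsY l)" "set (bsY l) \<subseteq> R" using Y(5) iY by blast+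
    have "ps ls i < sum_list (map fst (bsY l))" using iY ad by (simp add: adapted_blocks_def)
    from bk_ps_props[OF this] have b: "bk (map fst (bsY l)) (ps ls i) < length (bsY l)"
      "pY i < fst (tY i)" by (auto simp: pY_def tY_def l_def)
    then have "tY i \<in> R" using ad(2) by (auto simp: tY_def l_def[symmetric])
    then show ?thesis using b iY by (auto simp: Fl_def cls_def l_def)
  qed
  have cls'Fl: "cls' k \<in> Fl" if k: "k < N" for k
  proof -
    define m where "m = bk ms k"
    note kZ = idxZ[OF k, folded m_def]
    have ad: "adapted_blocks G X \<phi> H (Ds ! m) (bsZ m)" "set (bsZ m) \<subseteq> R" using Z(5) kZ by blast+
    have "ps ms k < sum_list (map fst (bsZ m))" using kZ ad by (simp add: adapted_blocks_def)
    from bk_ps_props[OF this] have b: "bk (map fst (bsZ m)) (ps ms k) < length (bsZ m)"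
      "pZ k < fst (tZ k)" by (auto simp: pZ_def tZ_def m_def)
    then have tR: "tZ k \<in> R" using ad(2) by (auto simp: tZ_def m_def[symmetric])
    obtain z where z: "z \<in> X" "Zs ! m = orb H \<phi> z" using orbZ kZ by blast
    have "z \<in> Zs ! m" using orb_self[OF act subH z(1)] z by simp
    then have s: "(SOME z. z \<in> Zs ! m) \<in> Zs ! m" by (rule someI)
    then have "(SOME z. z \<in> Zs ! m) \<in> X" using orb_sub[OF act subH z(1)] z by auto
    then have "oZ k \<in> set Ys" using Y(3) by (simp add: oZ_def m_def[symmetric] sub_orbits_orb)
    then show ?thesis using b tR by (auto simp: Fl_def cls'_def)
  qed
  have rowsFl: "card (rows c) = Defs.mult G X \<phi> H R (fst c) (fst (snd c))" if c: "c \<in> Fl" for c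
  proof -
    obtain Y r q where c': "c = (Y, r, q)" by (cases c) auto
    have "Y \<in> set Ys" "q < fst r" using c c' by (auto simp: Fl_def)
    then obtain l where "l < length Ys" "Y = Ys ! l" by (auto simp: in_set_conv_nth)
    then show ?thesis using rowcard \<open>q < fst r\<close> c' by simp
  qed
  have KYle: "Defs.mult G X \<phi> H R Y r \<le> KX G X \<phi> K H R" if "Y \<in> set Ys" "r \<in> R" for Y r
  proof -
    have "Defs.mult G X \<phi> H R Y r \<le> KY G X \<phi> H R Y"
      unfolding KY_def by (rule Max_ge) (use Rfin that(2) in auto)
    also have "\<dots> \<le> KX G X \<phi> K H R"
      unfolding KX_def Y(3)[symmetric] by (rule Max_ge) (use that(1) in auto)
    finally show ?thesis .
  qed
  have colb: "card {i. i < N \<and> C i k \<noteq> 0} \<le> KX G X \<phi> K H R" if k: "k < N" for k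
  proof -
    have "{i. i < N \<and> C i k \<noteq> 0} \<subseteq> rows (cls' k)" using R1 k by (auto simp: rows_def)
    then have "card {i. i < N \<and> C i k \<noteq> 0} \<le> card (rows (cls' k))"
      by (intro card_mono) (auto simp: rows_def)
    also have "\<dots> = Defs.mult G X \<phi> H R (fst (cls' k)) (fst (snd (cls' k)))" using rowsFl cls'Fl k by blast
    also have "\<dots> \<le> KX G X \<phi> K H R" using cls'Fl[OF k] KYle by (auto simp: Fl_def)
    finally show ?thesis .
  qed
  define S where "S = {(i, k). i < N \<and> k < N \<and> C i k \<noteq> 0}"
  have nnzS: "nnz (card X) (card X) C = card S" by (simp add: nnz_def S_def N_def)
  have finS: "finite S" unfolding S_def by (rule finite_subset[of _ "{..<N} \<times> {..<N}"]) auto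
  have part1: "card S \<le> PhiX G X \<phi> K H R"
  proof -
    have "S \<subseteq> (\<Union>c\<in>Fl. rows c \<times> cols c)"
    proof
      fix x assume "x \<in> S"
      then obtain i k where x: "x = (i, k)" "i < N" "k < N" "C i k \<noteq> 0" by (auto simp: S_def)
      have "cls i = cls' k" using R1 x by blast
      then show "x \<in> (\<Union>c\<in>Fl. rows c \<times> cols c)" using clsFl[OF x(2)] x by (auto simp: rows_def cols_def)
    qed
    then have "card S \<le> card (\<Union>c\<in>Fl. rows c \<times> cols c)"
      by (intro card_mono) (use finFl in \<open>auto simp: rows_def cols_def\<close>)
    also have "\<dots> \<le> (\<Sum>c\<in>Fl. card (rows c \<times> cols c))" by (rule card_UN_le[OF finFl])
    also have "\<dots> = (\<Sum>c\<in>Fl. (Defs.mult G X \<phi> H R (fst c) (fst (snd c)))\<^sup>2)"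
      by (rule sum.cong) (simp_all add: card_cartesian_product rc[symmetric] rowsFl power2_eq_square)
    also have "\<dots> = (\<Sum>Y\<in>set Ys. \<Sum>rq\<in>Sigma R (\<lambda>r. {..<fst r}). (Defs.mult G X \<phi> H R Y (fst rq))\<^sup>2)"
      unfolding Fl_def using Rfin by (subst sum.Sigma) (auto simp: case_prod_beta)
    also have "\<dots> = (\<Sum>Y\<in>set Ys. \<Sum>r\<in>R. \<Sum>q<fst r. (Defs.mult G X \<phi> H R Y r)\<^sup>2)"
      using Rfin by (subst sum.Sigma) (auto simp: case_prod_beta)
    also have "\<dots> = (\<Sum>Y\<in>set Ys. PhiY G X \<phi> H R Y)" by (simp add: PhiY_def mult.commute)
    also have "\<dots> = PhiX G X \<phi> K H R" by (simp add: PhiX_def Y(3))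
    finally show ?thesis .
  qed
  have part3: "card S \<le> KX G X \<phi> K H R * N"
  proof -
    have "S \<subseteq> (\<Union>k\<in>{..<N}. {i. i < N \<and> C i k \<noteq> 0} \<times> {k})" by (auto simp: S_def)
    then have "card S \<le> card (\<Union>k\<in>{..<N}. {i. i < N \<and> C i k \<noteq> 0} \<times> {k})"
      by (intro card_mono) auto
    also have "\<dots> \<le> (\<Sum>k<N. card ({i. i < N \<and> C i k \<noteq> 0} \<times> {k}))" by (rule card_UN_le) simp
    also have "\<dots> = (\<Sum>k<N. card {i. i < N \<and> C i k \<noteq> 0})" by (simp add: card_cartesian_product)
    also have "\<dots> \<le> (\<Sum>k<N. KX G X \<phi> K H R)" by (rule sum_mono) (use colb in simp)
    also have "\<dots> = KX G X \<phi> K H R * N" by simp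
    finally show ?thesis .
  qed
  show ?thesis
    using part1 part3 colb nnzS
    by (simp add: C_def K_def H_def R_def N_def)
qed



end
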